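(* Let $\mathbf K$ be an M$\Delta$C. Consider the conditions: (a) there exist two proper coprime complementary thick ideals of $\mathbf K$; (b) there exist two proper coprime complementary principal ideals of $\mathbf K$; (c) $\operatorname{Spc}\mathbf K$ is disconnected, i.e. there exist proper disjoint closed subsets $Z_1,Z_2$ with $\operatorname{Spc}\mathbf K=Z_1\sqcup Z_2$. Then (a) $\Leftrightarrow$ (b), and these imply (c). If moreover either (i) $\mathbf K$ is generated by a single object $G$ as a thick (triangulated) subcategory, or (ii) $\operatorname{Spc}\mathbf K$ is a Noetherian topological space, then (a), (b), (c) are all equivalent.
   Context: M$\Delta$C: triangulated category with monoidal structure $(\otimes,\mathbf 1)$, $\otimes$ exact in each variable. Thick ideal: full triangulated subcategory closed under direct summands and two-sided tensoring with arbitrary objects; $\langle\mathcal S\rangle$ the smallest thick ideal containing $\mathcal S$; principal ideal: $\langle A\rangle$. $\mathbf I,\mathbf J$ coprime if $\langle\mathbf I\cup\mathbf J\rangle=\mathbf K$. Prime ideal: proper thick ideal $\mathbf P$ such that $\mathbf I\otimes\mathbf J\subseteq\mathbf P$ for thick ideals $\mathbf I,\mathbf J$ implies $\mathbf I\subseteq\mathbf P$ or $\mathbf J\subseteq\mathbf P$. The prime radical of $\mathbf K$ is the intersection of all prime ideals. Two thick ideals are complementary if their intersection is contained in the prime radical. $\operatorname{Spc}\mathbf K$: set of prime ideals with closed sets generated (by intersections) from $V(A)=\{\mathbf P:A\notin\mathbf P\}$. *)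

theory Defs
  imports Main
begin

text \<open>Objects have type 'o, morphisms type 'm.  Every element of 'o is an object
of K and every element of 'm is a morphism (with domain and codomain).\<close>

record ('o, 'm) mdc =
  Dom  :: "'m \<Rightarrow> 'o"
  Cod  :: "'m \<Rightarrow> 'o"
  Cmp  :: "'m \<Rightarrow> 'm \<Rightarrow> 'm"          \<comment> \<open>Cmp g f = g after f\<close>
  Idm  :: "'o \<Rightarrow> 'm"
  Addm :: "'m \<Rightarrow> 'm \<Rightarrow> 'm"
  Negm :: "'m \<Rightarrow> 'm"
  Zerom :: "'o \<Rightarrow> 'o \<Rightarrow> 'm"
  Sh   :: "'o \<Rightarrow> 'o"
  ShM  :: "'m \<Rightarrow> 'm"
  Dtri :: "'m \<Rightarrow> 'm \<Rightarrow> 'm \<Rightarrow> bool"   \<comment> \<open>distinguished triangles X -f-> Y -g-> Z -h-> Sh X\<close>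
  Ten  :: "'o \<Rightarrow> 'o \<Rightarrow> 'o"
  TenM :: "'m \<Rightarrow> 'm \<Rightarrow> 'm"
  One  :: "'o"
  Asc  :: "'o \<Rightarrow> 'o \<Rightarrow> 'o \<Rightarrow> 'm"
  Lu   :: "'o \<Rightarrow> 'm"
  Ru   :: "'o \<Rightarrow> 'm"
  ThL  :: "'o \<Rightarrow> 'o \<Rightarrow> 'm"          \<comment> \<open>ThL X A : (Sh X)\<otimes>A \<rightarrow> Sh (X\<otimes>A)\<close>
  ThR  :: "'o \<Rightarrow> 'o \<Rightarrow> 'm"          \<comment> \<open>ThR A X : A\<otimes>(Sh X) \<rightarrow> Sh (A\<otimes>X)\<close>

definition hom :: "('o,'m,'z) mdc_scheme \<Rightarrow> 'o \<Rightarrow> 'o \<Rightarrow> 'm set" where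
  "hom C X Y = {f. Dom C f = X \<and> Cod C f = Y}"

definition iso :: "('o,'m,'z) mdc_scheme \<Rightarrow> 'm \<Rightarrow> bool" where
  "iso C f \<longleftrightarrow> (\<exists>g. g \<in> hom C (Cod C f) (Dom C f) \<and>
      Cmp C g f = Idm C (Dom C f) \<and> Cmp C f g = Idm C (Cod C f))"

definition is_zero_obj :: "('o,'m,'z) mdc_scheme \<Rightarrow> 'o \<Rightarrow> bool" where
  "is_zero_obj C Z \<longleftrightarrow> (\<forall>X. hom C Z X = {Zerom C Z X} \<and> hom C X Z = {Zerom C X Z})"

definition is_category :: "('o,'m,'z) mdc_scheme \<Rightarrow> bool" where
  "is_category C \<longleftrightarrow>
     (\<forall>X. Idm C X \<in> hom C X X) \<and>
     (\<forall>X Y Z f g. f \<in> hom C X Y \<longrightarrow> g \<in> hom C Y Z \<longrightarrow> Cmp C g f \<in> hom C X Z) \<and>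
     (\<forall>X Y f. f \<in> hom C X Y \<longrightarrow> Cmp C (Idm C Y) f = f \<and> Cmp C f (Idm C X) = f) \<and>
     (\<forall>W X Y Z f g h. f \<in> hom C W X \<longrightarrow> g \<in> hom C X Y \<longrightarrow> h \<in> hom C Y Z \<longrightarrow>
        Cmp C h (Cmp C g f) = Cmp C (Cmp C h g) f)"

definition is_additive :: "('o,'m,'z) mdc_scheme \<Rightarrow> bool" where
  "is_additive C \<longleftrightarrow>
     (\<forall>X Y f g. f \<in> hom C X Y \<longrightarrow> g \<in> hom C X Y \<longrightarrow> Addm C f g \<in> hom C X Y) \<and>
     (\<forall>X Y f. f \<in> hom C X Y \<longrightarrow> Negm C f \<in> hom C X Y) \<and>
     (\<forall>X Y. Zerom C X Y \<in> hom C X Y) \<and>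
     (\<forall>X Y f g h. f \<in> hom C X Y \<longrightarrow> g \<in> hom C X Y \<longrightarrow> h \<in> hom C X Y \<longrightarrow>
        Addm C (Addm C f g) h = Addm C f (Addm C g h)) \<and>
     (\<forall>X Y f g. f \<in> hom C X Y \<longrightarrow> g \<in> hom C X Y \<longrightarrow> Addm C f g = Addm C g f) \<and>
     (\<forall>X Y f. f \<in> hom C X Y \<longrightarrow> Addm C f (Zerom C X Y) = f) \<and>
     (\<forall>X Y f. f \<in> hom C X Y \<longrightarrow> Addm C f (Negm C f) = Zerom C X Y) \<and>
     (\<forall>X Y Z f f' g. f \<in> hom C X Y \<longrightarrow> f' \<in> hom C X Y \<longrightarrow> g \<in> hom C Y Z \<longrightarrow>
        Cmp C g (Addm C f f') = Addm C (Cmp C g f) (Cmp C g f')) \<and>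
     (\<forall>X Y Z f g g'. f \<in> hom C X Y \<longrightarrow> g \<in> hom C Y Z \<longrightarrow> g' \<in> hom C Y Z \<longrightarrow>
        Cmp C (Addm C g g') f = Addm C (Cmp C g f) (Cmp C g' f)) \<and>
     (\<exists>Z. is_zero_obj C Z) \<and>
     (\<forall>X Y. \<exists>P i1 i2 p1 p2. i1 \<in> hom C X P \<and> i2 \<in> hom C Y P \<and> p1 \<in> hom C P X \<and> p2 \<in> hom C P Y \<and>
        Cmp C p1 i1 = Idm C X \<and> Cmp C p2 i2 = Idm C Y \<and>
        Cmp C p2 i1 = Zerom C X Y \<and> Cmp C p1 i2 = Zerom C Y X \<and>
        Addm C (Cmp C i1 p1) (Cmp C i2 p2) = Idm C P)"

definition is_shift :: "('o,'m,'z) mdc_scheme \<Rightarrow> bool" where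
  "is_shift C \<longleftrightarrow>
     (\<forall>X Y f. f \<in> hom C X Y \<longrightarrow> ShM C f \<in> hom C (Sh C X) (Sh C Y)) \<and>
     (\<forall>X. ShM C (Idm C X) = Idm C (Sh C X)) \<and>
     (\<forall>X Y Z f g. f \<in> hom C X Y \<longrightarrow> g \<in> hom C Y Z \<longrightarrow> ShM C (Cmp C g f) = Cmp C (ShM C g) (ShM C f)) \<and>
     (\<forall>X Y f g. f \<in> hom C X Y \<longrightarrow> g \<in> hom C X Y \<longrightarrow> ShM C (Addm C f g) = Addm C (ShM C f) (ShM C g)) \<and>
     (\<forall>X Y. bij_betw (ShM C) (hom C X Y) (hom C (Sh C X) (Sh C Y))) \<and>
     (\<forall>Y. \<exists>X u. u \<in> hom C (Sh C X) Y \<and> iso C u)"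

definition is_triangulated :: "('o,'m,'z) mdc_scheme \<Rightarrow> bool" where
  "is_triangulated C \<longleftrightarrow>
     is_category C \<and> is_additive C \<and> is_shift C \<and>
     \<comment> \<open>shape of triangles\<close>
     (\<forall>f g h. Dtri C f g h \<longrightarrow> (\<exists>X Y Z. f \<in> hom C X Y \<and> g \<in> hom C Y Z \<and> h \<in> hom C Z (Sh C X))) \<and>
     \<comment> \<open>TR1: closure under isomorphism of triangles\<close>
     (\<forall>X Y Z X' Y' Z' f g h f' g' h' u v w.
        Dtri C f g h \<and> f \<in> hom C X Y \<and> g \<in> hom C Y Z \<and> h \<in> hom C Z (Sh C X) \<and>
        f' \<in> hom C X' Y' \<and> g' \<in> hom C Y' Z' \<and> h' \<in> hom C Z' (Sh C X') \<and>
        u \<in> hom C X X' \<and> v \<in> hom C Y Y' \<and> w \<in> hom C Z Z' \<and> iso C u \<and> iso C v \<and> iso C w \<and>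
        Cmp C v f = Cmp C f' u \<and> Cmp C w g = Cmp C g' v \<and> Cmp C (ShM C u) h = Cmp C h' w
        \<longrightarrow> Dtri C f' g' h') \<and>
     \<comment> \<open>TR1: X -id-> X -> 0 -> Sh X is distinguished\<close>
     (\<forall>X Z. is_zero_obj C Z \<longrightarrow> Dtri C (Idm C X) (Zerom C X Z) (Zerom C Z (Sh C X))) \<and>
     \<comment> \<open>TR1: every morphism extends to a distinguished triangle\<close>
     (\<forall>X Y f. f \<in> hom C X Y \<longrightarrow> (\<exists>Z g h. g \<in> hom C Y Z \<and> h \<in> hom C Z (Sh C X) \<and> Dtri C f g h)) \<and>
     \<comment> \<open>TR2: rotation\<close>
     (\<forall>f g h. Dtri C f g h \<longleftrightarrow> Dtri C g h (Negm C (ShM C f))) \<and>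
     \<comment> \<open>TR3: morphisms of triangles\<close>
     (\<forall>X Y Z X' Y' Z' f g h f' g' h' u v.
        Dtri C f g h \<and> f \<in> hom C X Y \<and> g \<in> hom C Y Z \<and> h \<in> hom C Z (Sh C X) \<and>
        Dtri C f' g' h' \<and> f' \<in> hom C X' Y' \<and> g' \<in> hom C Y' Z' \<and> h' \<in> hom C Z' (Sh C X') \<and>
        u \<in> hom C X X' \<and> v \<in> hom C Y Y' \<and> Cmp C v f = Cmp C f' u
        \<longrightarrow> (\<exists>w. w \<in> hom C Z Z' \<and> Cmp C w g = Cmp C g' v \<and> Cmp C (ShM C u) h = Cmp C h' w)) \<and>
     \<comment> \<open>TR4: octahedral axiom\<close>
     (\<forall>X Y Z Z' X' Y' f g f1 f2 g1 g2 h1 h2.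
        f \<in> hom C X Y \<and> g \<in> hom C Y Z \<and>
        f1 \<in> hom C Y Z' \<and> f2 \<in> hom C Z' (Sh C X) \<and> Dtri C f f1 f2 \<and>
        g1 \<in> hom C Z X' \<and> g2 \<in> hom C X' (Sh C Y) \<and> Dtri C g g1 g2 \<and>
        h1 \<in> hom C Z Y' \<and> h2 \<in> hom C Y' (Sh C X) \<and> Dtri C (Cmp C g f) h1 h2
        \<longrightarrow> (\<exists>u v. u \<in> hom C Z' Y' \<and> v \<in> hom C Y' X' \<and>
               Dtri C u v (Cmp C (ShM C f1) g2) \<and>
               Cmp C u f1 = Cmp C h1 g \<and> Cmp C h2 u = f2 \<and>
               Cmp C v h1 = g1 \<and> Cmp C g2 v = Cmp C (ShM C f) h2))"

definition is_monoidal :: "('o,'m,'z) mdc_scheme \<Rightarrow> bool" where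
  "is_monoidal C \<longleftrightarrow>
     (\<forall>X Y X' Y' f g. f \<in> hom C X Y \<longrightarrow> g \<in> hom C X' Y' \<longrightarrow>
        TenM C f g \<in> hom C (Ten C X X') (Ten C Y Y')) \<and>
     (\<forall>X Y. TenM C (Idm C X) (Idm C Y) = Idm C (Ten C X Y)) \<and>
     (\<forall>X Y Z X' Y' Z' f g f' g'. f \<in> hom C X Y \<longrightarrow> g \<in> hom C Y Z \<longrightarrow>
        f' \<in> hom C X' Y' \<longrightarrow> g' \<in> hom C Y' Z' \<longrightarrow>
        TenM C (Cmp C g f) (Cmp C g' f') = Cmp C (TenM C g g') (TenM C f f')) \<and>
     (\<forall>X Y Z. Asc C X Y Z \<in> hom C (Ten C (Ten C X Y) Z) (Ten C X (Ten C Y Z)) \<and> iso C (Asc C X Y Z)) \<and>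
     (\<forall>X. Lu C X \<in> hom C (Ten C (One C) X) X \<and> iso C (Lu C X)) \<and>
     (\<forall>X. Ru C X \<in> hom C (Ten C X (One C)) X \<and> iso C (Ru C X)) \<and>
     (\<forall>X Y Z X' Y' Z' f g h. f \<in> hom C X X' \<longrightarrow> g \<in> hom C Y Y' \<longrightarrow> h \<in> hom C Z Z' \<longrightarrow>
        Cmp C (Asc C X' Y' Z') (TenM C (TenM C f g) h) = Cmp C (TenM C f (TenM C g h)) (Asc C X Y Z)) \<and>
     (\<forall>X Y f. f \<in> hom C X Y \<longrightarrow> Cmp C (Lu C Y) (TenM C (Idm C (One C)) f) = Cmp C f (Lu C X)) \<and>
     (\<forall>X Y f. f \<in> hom C X Y \<longrightarrow> Cmp C (Ru C Y) (TenM C f (Idm C (One C))) = Cmp C f (Ru C X)) \<and>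
     \<comment> \<open>pentagon\<close>
     (\<forall>W X Y Z.
        Cmp C (Asc C W X (Ten C Y Z)) (Asc C (Ten C W X) Y Z) =
        Cmp C (TenM C (Idm C W) (Asc C X Y Z))
          (Cmp C (Asc C W (Ten C X Y) Z) (TenM C (Asc C W X Y) (Idm C Z)))) \<and>
     \<comment> \<open>triangle\<close>
     (\<forall>X Y. Cmp C (TenM C (Idm C X) (Lu C Y)) (Asc C X (One C) Y) = TenM C (Ru C X) (Idm C Y))"

text \<open>Exactness of the tensor product in each variable: for every object A the functors
  - \<otimes> A and A \<otimes> - are additive triangulated functors, the required natural isomorphisms
  with the suspension being ThL and ThR.\<close>
definition is_exact_tensor :: "('o,'m,'z) mdc_scheme \<Rightarrow> bool" where
  "is_exact_tensor C \<longleftrightarrow>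
     (\<forall>A X Y f g. f \<in> hom C X Y \<longrightarrow> g \<in> hom C X Y \<longrightarrow>
        TenM C (Addm C f g) (Idm C A) = Addm C (TenM C f (Idm C A)) (TenM C g (Idm C A)) \<and>
        TenM C (Idm C A) (Addm C f g) = Addm C (TenM C (Idm C A) f) (TenM C (Idm C A) g)) \<and>
     (\<forall>A X. ThL C X A \<in> hom C (Ten C (Sh C X) A) (Sh C (Ten C X A)) \<and> iso C (ThL C X A)) \<and>
     (\<forall>A X. ThR C A X \<in> hom C (Ten C A (Sh C X)) (Sh C (Ten C A X)) \<and> iso C (ThR C A X)) \<and>
     (\<forall>A X Y f. f \<in> hom C X Y \<longrightarrow>
        Cmp C (ThL C Y A) (TenM C (ShM C f) (Idm C A)) = Cmp C (ShM C (TenM C f (Idm C A))) (ThL C X A)) \<and>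
     (\<forall>A X Y f. f \<in> hom C X Y \<longrightarrow>
        Cmp C (ThR C A Y) (TenM C (Idm C A) (ShM C f)) = Cmp C (ShM C (TenM C (Idm C A) f)) (ThR C A X)) \<and>
     (\<forall>A X Y Z f g h. Dtri C f g h \<and> f \<in> hom C X Y \<and> g \<in> hom C Y Z \<and> h \<in> hom C Z (Sh C X) \<longrightarrow>
        Dtri C (TenM C f (Idm C A)) (TenM C g (Idm C A)) (Cmp C (ThL C X A) (TenM C h (Idm C A))) \<and>
        Dtri C (TenM C (Idm C A) f) (TenM C (Idm C A) g) (Cmp C (ThR C A X) (TenM C (Idm C A) h)))"

definition is_MDC :: "('o,'m,'z) mdc_scheme \<Rightarrow> bool" where
  "is_MDC C \<longleftrightarrow> is_triangulated C \<and> is_monoidal C \<and> is_exact_tensor C"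

definition summand :: "('o,'m,'z) mdc_scheme \<Rightarrow> 'o \<Rightarrow> 'o \<Rightarrow> bool" where
  "summand C A B \<longleftrightarrow> (\<exists>i p. i \<in> hom C A B \<and> p \<in> hom C B A \<and> Cmp C p i = Idm C A)"

definition thick :: "('o,'m,'z) mdc_scheme \<Rightarrow> 'o set \<Rightarrow> bool" where
  "thick C S \<longleftrightarrow> S \<noteq> {} \<and>
     (\<forall>X. X \<in> S \<longleftrightarrow> Sh C X \<in> S) \<and>
     (\<forall>X Y Z f g h. Dtri C f g h \<and> f \<in> hom C X Y \<and> g \<in> hom C Y Z \<longrightarrow>
        (X \<in> S \<and> Y \<in> S \<longrightarrow> Z \<in> S) \<and> (Y \<in> S \<and> Z \<in> S \<longrightarrow> X \<in> S) \<and> (X \<in> S \<and> Z \<in> S \<longrightarrow> Y \<in> S)) \<and>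
     (\<forall>A B. summand C A B \<and> B \<in> S \<longrightarrow> A \<in> S)"

definition thick_ideal :: "('o,'m,'z) mdc_scheme \<Rightarrow> 'o set \<Rightarrow> bool" where
  "thick_ideal C I \<longleftrightarrow> thick C I \<and> (\<forall>A \<in> I. \<forall>X. Ten C A X \<in> I \<and> Ten C X A \<in> I)"

definition thick_gen :: "('o,'m,'z) mdc_scheme \<Rightarrow> 'o set \<Rightarrow> 'o set" where
  "thick_gen C S = \<Inter> {T. thick C T \<and> S \<subseteq> T}"

definition ideal_gen :: "('o,'m,'z) mdc_scheme \<Rightarrow> 'o set \<Rightarrow> 'o set" where
  "ideal_gen C S = \<Inter> {I. thick_ideal C I \<and> S \<subseteq> I}"

definition principal_ideal :: "('o,'m,'z) mdc_scheme \<Rightarrow> 'o set \<Rightarrow> bool" where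
  "principal_ideal C I \<longleftrightarrow> (\<exists>A. I = ideal_gen C {A})"

definition proper_ideal :: "('o,'m,'z) mdc_scheme \<Rightarrow> 'o set \<Rightarrow> bool" where
  "proper_ideal C I \<longleftrightarrow> thick_ideal C I \<and> I \<noteq> UNIV"

definition coprime :: "('o,'m,'z) mdc_scheme \<Rightarrow> 'o set \<Rightarrow> 'o set \<Rightarrow> bool" where
  "coprime C I J \<longleftrightarrow> ideal_gen C (I \<union> J) = UNIV"

definition tens_set :: "('o,'m,'z) mdc_scheme \<Rightarrow> 'o set \<Rightarrow> 'o set \<Rightarrow> 'o set" where
  "tens_set C I J = {Ten C A B | A B. A \<in> I \<and> B \<in> J}"

definition prime_ideal :: "('o,'m,'z) mdc_scheme \<Rightarrow> 'o set \<Rightarrow> bool" where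
  "prime_ideal C P \<longleftrightarrow> proper_ideal C P \<and>
     (\<forall>I J. thick_ideal C I \<and> thick_ideal C J \<and> tens_set C I J \<subseteq> P \<longrightarrow> I \<subseteq> P \<or> J \<subseteq> P)"

definition Spc :: "('o,'m,'z) mdc_scheme \<Rightarrow> 'o set set" where
  "Spc C = {P. prime_ideal C P}"

definition prime_radical :: "('o,'m,'z) mdc_scheme \<Rightarrow> 'o set" where
  "prime_radical C = \<Inter> (Spc C)"

definition complementary :: "('o,'m,'z) mdc_scheme \<Rightarrow> 'o set \<Rightarrow> 'o set \<Rightarrow> bool" where
  "complementary C I J \<longleftrightarrow> I \<inter> J \<subseteq> prime_radical C"

definition Vsupp :: "('o,'m,'z) mdc_scheme \<Rightarrow> 'o \<Rightarrow> 'o set set" where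
  "Vsupp C A = {P \<in> Spc C. A \<notin> P}"

text \<open>Closed subsets of Spc: intersections (inside Spc) of families of sets V(A);
  the empty family gives Spc itself.\<close>
definition spc_closed :: "('o,'m,'z) mdc_scheme \<Rightarrow> 'o set set \<Rightarrow> bool" where
  "spc_closed C Z \<longleftrightarrow> (\<exists>S. Z = Spc C \<inter> \<Inter> (Vsupp C ` S))"

definition spc_disconnected :: "('o,'m,'z) mdc_scheme \<Rightarrow> bool" where
  "spc_disconnected C \<longleftrightarrow> (\<exists>Z1 Z2. spc_closed C Z1 \<and> spc_closed C Z2 \<and>
      Z1 \<noteq> Spc C \<and> Z2 \<noteq> Spc C \<and> Z1 \<inter> Z2 = {} \<and> Z1 \<union> Z2 = Spc C)"

definition spc_noetherian :: "('o,'m,'z) mdc_scheme \<Rightarrow> bool" where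
  "spc_noetherian C \<longleftrightarrow> (\<forall>Z :: nat \<Rightarrow> 'o set set.
      (\<forall>n. spc_closed C (Z n)) \<and> (\<forall>n. Z (Suc n) \<subseteq> Z n) \<longrightarrow> (\<exists>N. \<forall>n\<ge>N. Z n = Z N))"

end

theory Submission
  imports Defs
begin

locale MDC =
  fixes C :: "('o,'m,'z) mdc_scheme"
  assumes mdc: "is_MDC C"
begin

lemma cat: "is_category C" and add: "is_additive C" and shf: "is_shift C"
  and tri: "is_triangulated C" and mon: "is_monoidal C" and ext: "is_exact_tensor C"
  using mdc unfolding is_MDC_def is_triangulated_def by auto

lemmas cat_all = cat[unfolded is_category_def, THEN conjunct1] cat[unfolded is_category_def, THEN conjunct2, THEN conjunct1] cat[unfolded is_category_def, THEN conjunct2, THEN conjunct2, THEN conjunct1] cat[unfolded is_category_def, THEN conjunct2, THEN conjunct2, THEN conjunct2]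
lemmas add_all = add[unfolded is_additive_def, THEN conjunct1] add[unfolded is_additive_def, THEN conjunct2, THEN conjunct1] add[unfolded is_additive_def, THEN conjunct2, THEN conjunct2, THEN conjunct1] add[unfolded is_additive_def, THEN conjunct2, THEN conjunct2, THEN conjunct2, THEN conjunct1] add[unfolded is_additive_def, THEN conjunct2, THEN conjunct2, THEN conjunct2, THEN conjunct2, THEN conjunct1] add[unfolded is_additive_def, THEN conjunct2, THEN conjunct2, THEN conjunct2, THEN conjunct2, THEN conjunct2, THEN conjunct1] add[unfolded is_additive_def, THEN conjunct2, THEN conjunct2, THEN conjunct2, THEN conjunct2, THEN conjunct2, THEN conjunct2, THEN conjunct1] add[unfolded is_additive_def, THEN conjunct2, THEN conjunct2, THEN conjunct2, THEN conjunct2, THEN conjunct2, THEN conjunct2, THEN conjunct2, THEN conjunct1] add[unfolded is_additive_def, THEN conjunct2, THEN conjunct2, THEN conjunct2, THEN conjunct2, THEN conjunct2, THEN conjunct2, THEN conjunct2, THEN conjunct2, THEN conjunct1] add[unfolded is_additive_def, THEN conjunct2, THEN conjunct2, THEN conjunct2, THEN conjunct2, THEN conjunct2, THEN conjunct2, THEN conjunct2, THEN conjunct2, THEN conjunct2, THEN conjunct1] add[unfolded is_additive_def, THEN conjunct2, THEN conjunct2, THEN conjunct2, THEN conjunct2, THEN conjunct2, THEN conjunct2, THEN conjunct2, THEN conjunct2, THEN conjunct2, THEN conjunct2]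
lemma id_hom: "Idm C X \<in> hom C X X" using cat_all(1) by blast
lemma comp_hom: "f \<in> hom C X Y \<Longrightarrow> g \<in> hom C Y Z \<Longrightarrow> Cmp C g f \<in> hom C X Z"
  using cat_all(2) by blast
lemma id_l: "f \<in> hom C X Y \<Longrightarrow> Cmp C (Idm C Y) f = f" using cat_all(3) by blast
lemma id_r: "f \<in> hom C X Y \<Longrightarrow> Cmp C f (Idm C X) = f" using cat_all(3) by blast
lemma cassoc: "f \<in> hom C W X \<Longrightarrow> g \<in> hom C X Y \<Longrightarrow> h \<in> hom C Y Z \<Longrightarrow>
        Cmp C h (Cmp C g f) = Cmp C (Cmp C h g) f" using cat_all(4) by blast
lemma add_hom: "f \<in> hom C X Y \<Longrightarrow> g \<in> hom C X Y \<Longrightarrow> Addm C f g \<in> hom C X Y"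
  using add_all(1) by blast
lemma neg_hom: "f \<in> hom C X Y \<Longrightarrow> Negm C f \<in> hom C X Y" using add_all(2) by blast
lemma zero_hom: "Zerom C X Y \<in> hom C X Y" using add_all(3) by blast
lemma add_assoc: "f \<in> hom C X Y \<Longrightarrow> g \<in> hom C X Y \<Longrightarrow> h \<in> hom C X Y \<Longrightarrow>
        Addm C (Addm C f g) h = Addm C f (Addm C g h)" using add_all(4) by blast
lemma add_comm: "f \<in> hom C X Y \<Longrightarrow> g \<in> hom C X Y \<Longrightarrow> Addm C f g = Addm C g f" using add_all(5) by blast
lemma add_zero: "f \<in> hom C X Y \<Longrightarrow> Addm C f (Zerom C X Y) = f" using add_all(6) by blast
lemma add_neg: "f \<in> hom C X Y \<Longrightarrow> Addm C f (Negm C f) = Zerom C X Y" using add_all(7) by blast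
lemma comp_addR: "f \<in> hom C X Y \<Longrightarrow> f' \<in> hom C X Y \<Longrightarrow> g \<in> hom C Y Z \<Longrightarrow>
        Cmp C g (Addm C f f') = Addm C (Cmp C g f) (Cmp C g f')" using add_all(8) by blast
lemma comp_addL: "f \<in> hom C X Y \<Longrightarrow> g \<in> hom C Y Z \<Longrightarrow> g' \<in> hom C Y Z \<Longrightarrow>
        Cmp C (Addm C g g') f = Addm C (Cmp C g f) (Cmp C g' f)" using add_all(9) by blast
lemma zero_obj_ex: "\<exists>Z. is_zero_obj C Z" using add_all(10) by blast
lemma biprod: "\<exists>P i1 i2 p1 p2. i1 \<in> hom C X P \<and> i2 \<in> hom C Y P \<and> p1 \<in> hom C P X \<and> p2 \<in> hom C P Y \<and>
        Cmp C p1 i1 = Idm C X \<and> Cmp C p2 i2 = Idm C Y \<and>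
        Cmp C p2 i1 = Zerom C X Y \<and> Cmp C p1 i2 = Zerom C Y X \<and>
        Addm C (Cmp C i1 p1) (Cmp C i2 p2) = Idm C P" using add_all(11) by blast

lemma idem_zero: assumes "e \<in> hom C X Y" "Addm C e e = e" shows "e = Zerom C X Y"
proof -
  have "Zerom C X Y = Addm C e (Negm C e)" using add_neg assms by simp
  also have "\<dots> = Addm C (Addm C e e) (Negm C e)" using assms by simp
  also have "\<dots> = Addm C e (Addm C e (Negm C e))" using add_assoc assms neg_hom by blast
  also have "\<dots> = e" using add_neg add_zero assms by simp
  finally show ?thesis by simp
qed

lemma comp_zeroR: assumes "g \<in> hom C Y Z" shows "Cmp C g (Zerom C X Y) = Zerom C X Z"
proof -
  have "Cmp C g (Zerom C X Y) = Cmp C g (Addm C (Zerom C X Y) (Zerom C X Y))"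
    using add_zero zero_hom by simp
  also have "\<dots> = Addm C (Cmp C g (Zerom C X Y)) (Cmp C g (Zerom C X Y))"
    using comp_addR zero_hom assms by blast
  finally show ?thesis using idem_zero comp_hom zero_hom assms by metis
qed

lemma comp_zeroL: assumes "f \<in> hom C X Y" shows "Cmp C (Zerom C Y Z) f = Zerom C X Z"
proof -
  have "Cmp C (Zerom C Y Z) f = Cmp C (Addm C (Zerom C Y Z) (Zerom C Y Z)) f"
    using add_zero zero_hom by simp
  also have "\<dots> = Addm C (Cmp C (Zerom C Y Z) f) (Cmp C (Zerom C Y Z) f)"
    using comp_addL zero_hom assms by blast
  finally show ?thesis using idem_zero comp_hom zero_hom assms by metis
qed

lemma iso_inv: assumes "u \<in> hom C X Y" "iso C u"
  obtains v where "v \<in> hom C Y X" "Cmp C v u = Idm C X" "Cmp C u v = Idm C Y"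
  using assms unfolding iso_def hom_def by auto

lemma iso_summand: assumes "u \<in> hom C X Y" "iso C u" shows "summand C X Y" "summand C Y X"
  using iso_inv[OF assms] assms unfolding summand_def by metis+

lemma thick_D: assumes "thick C S"
  shows "S \<noteq> {}" "\<And>X. X \<in> S \<longleftrightarrow> Sh C X \<in> S"
   "\<And>X Y Z f g h. Dtri C f g h \<Longrightarrow> f \<in> hom C X Y \<Longrightarrow> g \<in> hom C Y Z \<Longrightarrow> X \<in> S \<Longrightarrow> Y \<in> S \<Longrightarrow> Z \<in> S"
   "\<And>X Y Z f g h. Dtri C f g h \<Longrightarrow> f \<in> hom C X Y \<Longrightarrow> g \<in> hom C Y Z \<Longrightarrow> Y \<in> S \<Longrightarrow> Z \<in> S \<Longrightarrow> X \<in> S"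
   "\<And>X Y Z f g h. Dtri C f g h \<Longrightarrow> f \<in> hom C X Y \<Longrightarrow> g \<in> hom C Y Z \<Longrightarrow> X \<in> S \<Longrightarrow> Z \<in> S \<Longrightarrow> Y \<in> S"
   "\<And>A B. summand C A B \<Longrightarrow> B \<in> S \<Longrightarrow> A \<in> S"
  using assms unfolding thick_def by blast+

lemma thick_I: assumes "S \<noteq> {}" "\<And>X. X \<in> S \<longleftrightarrow> Sh C X \<in> S"
   "\<And>X Y Z f g h. Dtri C f g h \<Longrightarrow> f \<in> hom C X Y \<Longrightarrow> g \<in> hom C Y Z \<Longrightarrow> X \<in> S \<Longrightarrow> Y \<in> S \<Longrightarrow> Z \<in> S"
   "\<And>X Y Z f g h. Dtri C f g h \<Longrightarrow> f \<in> hom C X Y \<Longrightarrow> g \<in> hom C Y Z \<Longrightarrow> Y \<in> S \<Longrightarrow> Z \<in> S \<Longrightarrow> X \<in> S"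
   "\<And>X Y Z f g h. Dtri C f g h \<Longrightarrow> f \<in> hom C X Y \<Longrightarrow> g \<in> hom C Y Z \<Longrightarrow> X \<in> S \<Longrightarrow> Z \<in> S \<Longrightarrow> Y \<in> S"
   "\<And>A B. summand C A B \<Longrightarrow> B \<in> S \<Longrightarrow> A \<in> S"
  shows "thick C S"
  using assms unfolding thick_def by meson

lemma thick_iso: assumes "thick C S" "u \<in> hom C X Y" "iso C u" shows "X \<in> S \<longleftrightarrow> Y \<in> S"
  using thick_D(6)[OF assms(1)] iso_summand[OF assms(2,3)] by blast

lemmas trs = tri[unfolded is_triangulated_def, THEN conjunct2, THEN conjunct2, THEN conjunct2]
lemmas tr_shape = trs[THEN conjunct1]
lemmas tr_iso = trs[THEN conjunct2, THEN conjunct1]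
lemmas tr_id = trs[THEN conjunct2, THEN conjunct2, THEN conjunct1]
lemmas tr_ext = trs[THEN conjunct2, THEN conjunct2, THEN conjunct2, THEN conjunct1]
lemmas tr_rot = trs[THEN conjunct2, THEN conjunct2, THEN conjunct2, THEN conjunct2, THEN conjunct1]
lemmas tr_3 = trs[THEN conjunct2, THEN conjunct2, THEN conjunct2, THEN conjunct2, THEN conjunct2, THEN conjunct1]

lemma dtri_shape: assumes "Dtri C f g h" "f \<in> hom C X Y" "g \<in> hom C Y Z" shows "h \<in> hom C Z (Sh C X)"
proof -
  obtain X' Y' Z' where "f \<in> hom C X' Y'" "g \<in> hom C Y' Z'" "h \<in> hom C Z' (Sh C X')"
    using tr_shape assms(1) by blast
  then show ?thesis using assms unfolding hom_def by auto
qed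

lemma TR1id: "is_zero_obj C Z \<Longrightarrow> Dtri C (Idm C X) (Zerom C X Z) (Zerom C Z (Sh C X))"
  using tr_id by blast

lemma thick_zero: assumes "thick C S" "is_zero_obj C Z" shows "Z \<in> S"
proof -
  obtain X where "X \<in> S" using thick_D(1)[OF assms(1)] by blast
  then show ?thesis using thick_D(3)[OF assms(1) TR1id[OF assms(2), of X] id_hom zero_hom] by blast
qed

lemma thick_UNIV: "thick C UNIV" unfolding thick_def by auto

lemma thick_Inter: assumes "\<And>T. T \<in> F \<Longrightarrow> thick C T" shows "thick C (\<Inter>F)"
proof (rule thick_I)
  obtain Z where Z: "is_zero_obj C Z" using zero_obj_ex by blast
  have "Z \<in> \<Inter>F" using thick_zero[OF assms Z] by blast
  then show "\<Inter>F \<noteq> {}" by blast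
  show "X \<in> \<Inter>F \<longleftrightarrow> Sh C X \<in> \<Inter>F" for X using thick_D(2)[OF assms] by blast
  show "Dtri C f g h \<Longrightarrow> f \<in> hom C X Y \<Longrightarrow> g \<in> hom C Y Z \<Longrightarrow> X \<in> \<Inter>F \<Longrightarrow> Y \<in> \<Inter>F \<Longrightarrow> Z \<in> \<Inter>F"
    for X Y Z f g h using thick_D(3)[OF assms] by blast
  show "Dtri C f g h \<Longrightarrow> f \<in> hom C X Y \<Longrightarrow> g \<in> hom C Y Z \<Longrightarrow> Y \<in> \<Inter>F \<Longrightarrow> Z \<in> \<Inter>F \<Longrightarrow> X \<in> \<Inter>F"
    for X Y Z f g h using thick_D(4)[OF assms] by blast
  show "Dtri C f g h \<Longrightarrow> f \<in> hom C X Y \<Longrightarrow> g \<in> hom C Y Z \<Longrightarrow> X \<in> \<Inter>F \<Longrightarrow> Z \<in> \<Inter>F \<Longrightarrow> Y \<in> \<Inter>F"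
    for X Y Z f g h using thick_D(5)[OF assms] by blast
  show "summand C A B \<Longrightarrow> B \<in> \<Inter>F \<Longrightarrow> A \<in> \<Inter>F" for A B using thick_D(6)[OF assms] by blast
qed

lemma thick_ideal_Inter: assumes "\<And>T. T \<in> F \<Longrightarrow> thick_ideal C T" shows "thick_ideal C (\<Inter>F)"
  using thick_Inter[of F] assms unfolding thick_ideal_def by blast

lemma ideal_gen_ideal: "thick_ideal C (ideal_gen C S)"
  unfolding ideal_gen_def by (rule thick_ideal_Inter) auto
lemma ideal_gen_sub: "S \<subseteq> ideal_gen C S" unfolding ideal_gen_def by auto
lemma ideal_gen_min: "thick_ideal C I \<Longrightarrow> S \<subseteq> I \<Longrightarrow> ideal_gen C S \<subseteq> I"
  unfolding ideal_gen_def by auto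
lemma ideal_gen_mono: "S \<subseteq> T \<Longrightarrow> ideal_gen C S \<subseteq> ideal_gen C T"
  unfolding ideal_gen_def by auto

lemmas mon_all = mon[unfolded is_monoidal_def, THEN conjunct1] mon[unfolded is_monoidal_def, THEN conjunct2, THEN conjunct1] mon[unfolded is_monoidal_def, THEN conjunct2, THEN conjunct2, THEN conjunct1] mon[unfolded is_monoidal_def, THEN conjunct2, THEN conjunct2, THEN conjunct2, THEN conjunct1] mon[unfolded is_monoidal_def, THEN conjunct2, THEN conjunct2, THEN conjunct2, THEN conjunct2, THEN conjunct1] mon[unfolded is_monoidal_def, THEN conjunct2, THEN conjunct2, THEN conjunct2, THEN conjunct2, THEN conjunct2, THEN conjunct1] mon[unfolded is_monoidal_def, THEN conjunct2, THEN conjunct2, THEN conjunct2, THEN conjunct2, THEN conjunct2, THEN conjunct2, THEN conjunct1] mon[unfolded is_monoidal_def, THEN conjunct2, THEN conjunct2, THEN conjunct2, THEN conjunct2, THEN conjunct2, THEN conjunct2, THEN conjunct2, THEN conjunct1] mon[unfolded is_monoidal_def, THEN conjunct2, THEN conjunct2, THEN conjunct2, THEN conjunct2, THEN conjunct2, THEN conjunct2, THEN conjunct2, THEN conjunct2, THEN conjunct1] mon[unfolded is_monoidal_def, THEN conjunct2, THEN conjunct2, THEN conjunct2, THEN conjunct2, THEN conjunct2, THEN conjunct2, THEN conjunct2, THEN conjunct2, THEN conjunct2, THEN conjunct1] mon[unfolded is_monoidal_def, THEN conjunct2, THEN conjunct2, THEN conjunct2, THEN conjunct2, THEN conjunct2,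 THEN conjunct2, THEN conjunct2, THEN conjunct2, THEN conjunct2, THEN conjunct2]
lemmas ext_all = ext[unfolded is_exact_tensor_def, THEN conjunct1] ext[unfolded is_exact_tensor_def, THEN conjunct2, THEN conjunct1] ext[unfolded is_exact_tensor_def, THEN conjunct2, THEN conjunct2, THEN conjunct1] ext[unfolded is_exact_tensor_def, THEN conjunct2, THEN conjunct2, THEN conjunct2, THEN conjunct1] ext[unfolded is_exact_tensor_def, THEN conjunct2, THEN conjunct2, THEN conjunct2, THEN conjunct2, THEN conjunct1] ext[unfolded is_exact_tensor_def, THEN conjunct2, THEN conjunct2, THEN conjunct2, THEN conjunct2, THEN conjunct2]
lemmas shf_all = shf[unfolded is_shift_def, THEN conjunct1] shf[unfolded is_shift_def, THEN conjunct2, THEN conjunct1] shf[unfolded is_shift_def, THEN conjunct2, THEN conjunct2, THEN conjunct1] shf[unfolded is_shift_def, THEN conjunct2, THEN conjunct2, THEN conjunct2, THEN conjunct1] shf[unfolded is_shift_def, THEN conjunct2, THEN conjunct2, THEN conjunct2, THEN conjunct2, THEN conjunct1] shf[unfolded is_shift_def, THEN conjunct2, THEN conjunct2, THEN conjunct2, THEN conjunct2, THEN conjunct2]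

lemma TenM_hom: "f \<in> hom C X Y \<Longrightarrow> g \<in> hom C X' Y' \<Longrightarrow> TenM C f g \<in> hom C (Ten C X X') (Ten C Y Y')"
  using mon_all(1) by blast
lemma TenM_id: "TenM C (Idm C X) (Idm C Y) = Idm C (Ten C X Y)" using mon_all(2) by blast
lemma TenM_comp: "f \<in> hom C X Y \<Longrightarrow> g \<in> hom C Y Z \<Longrightarrow> f' \<in> hom C X' Y' \<Longrightarrow> g' \<in> hom C Y' Z' \<Longrightarrow>
        TenM C (Cmp C g f) (Cmp C g' f') = Cmp C (TenM C g g') (TenM C f f')" using mon_all(3) by blast
lemma Asc: "Asc C X Y Z \<in> hom C (Ten C (Ten C X Y) Z) (Ten C X (Ten C Y Z))" "iso C (Asc C X Y Z)"
  using mon_all(4) by blast+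
lemma Lu: "Lu C X \<in> hom C (Ten C (One C) X) X" "iso C (Lu C X)" using mon_all(5) by blast+
lemma Ru: "Ru C X \<in> hom C (Ten C X (One C)) X" "iso C (Ru C X)" using mon_all(6) by blast+
lemma ThL: "ThL C X A \<in> hom C (Ten C (Sh C X) A) (Sh C (Ten C X A))" "iso C (ThL C X A)"
  using ext_all(2) by blast+
lemma ThR: "ThR C A X \<in> hom C (Ten C A (Sh C X)) (Sh C (Ten C A X))" "iso C (ThR C A X)"
  using ext_all(3) by blast+
lemma dtri_ten: "Dtri C f g h \<Longrightarrow> f \<in> hom C X Y \<Longrightarrow> g \<in> hom C Y Z \<Longrightarrow> h \<in> hom C Z (Sh C X) \<Longrightarrow>
        Dtri C (TenM C f (Idm C A)) (TenM C g (Idm C A)) (Cmp C (ThL C X A) (TenM C h (Idm C A))) \<and>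
        Dtri C (TenM C (Idm C A) f) (TenM C (Idm C A) g) (Cmp C (ThR C A X) (TenM C (Idm C A) h))"
  using ext_all(6) by blast
lemma ShM_hom: "f \<in> hom C X Y \<Longrightarrow> ShM C f \<in> hom C (Sh C X) (Sh C Y)" using shf_all(1) by blast
lemma ShM_id: "ShM C (Idm C X) = Idm C (Sh C X)" using shf_all(2) by blast
lemma ShM_comp: "f \<in> hom C X Y \<Longrightarrow> g \<in> hom C Y Z \<Longrightarrow> ShM C (Cmp C g f) = Cmp C (ShM C g) (ShM C f)"
  using shf_all(3) by blast
lemma ShM_add: "f \<in> hom C X Y \<Longrightarrow> g \<in> hom C X Y \<Longrightarrow> ShM C (Addm C f g) = Addm C (ShM C f) (ShM C g)"
  using shf_all(4) by blast
lemma ShM_bij: "bij_betw (ShM C) (hom C X Y) (hom C (Sh C X) (Sh C Y))" using shf_all(5) by blast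
lemma Sh_surj: "\<exists>X u. u \<in> hom C (Sh C X) Y \<and> iso C u" using shf_all(6) by blast

lemma thick_ideal_D: "thick_ideal C I \<Longrightarrow> A \<in> I \<Longrightarrow> Ten C A X \<in> I"
   "thick_ideal C I \<Longrightarrow> A \<in> I \<Longrightarrow> Ten C X A \<in> I" "thick_ideal C I \<Longrightarrow> thick C I"
  unfolding thick_ideal_def by blast+

definition Lset where "Lset A S = {X. Ten C A X \<in> S}"
definition Rset where "Rset A S = {X. Ten C X A \<in> S}"

lemma Lset_thick: assumes S: "thick C S" and ne: "Lset A S \<noteq> {}" shows "thick C (Lset A S)"
proof (rule thick_I)
  show "Lset A S \<noteq> {}" by fact
  show "X \<in> Lset A S \<longleftrightarrow> Sh C X \<in> Lset A S" for X
    using thick_iso[OF S ThR] thick_D(2)[OF S] unfolding Lset_def by blast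
  have tt: "Dtri C (TenM C (Idm C A) f) (TenM C (Idm C A) g) (Cmp C (ThR C A X) (TenM C (Idm C A) h))"
     "TenM C (Idm C A) f \<in> hom C (Ten C A X) (Ten C A Y)" "TenM C (Idm C A) g \<in> hom C (Ten C A Y) (Ten C A Z)"
    if "Dtri C f g h" "f \<in> hom C X Y" "g \<in> hom C Y Z" for f g h X Y Z
    using dtri_ten[OF that dtri_shape[OF that]] TenM_hom[OF id_hom that(2)] TenM_hom[OF id_hom that(3)] by auto
  show "Z \<in> Lset A S" if a: "Dtri C f g h" "f \<in> hom C X Y" "g \<in> hom C Y Z" "X \<in> Lset A S" "Y \<in> Lset A S"
    for X Y Z f g h using thick_D(3)[OF S tt[OF a(1-3)]] a(4,5) unfolding Lset_def by blast
  show "X \<in> Lset A S" if a: "Dtri C f g h" "f \<in> hom C X Y" "g \<in> hom C Y Z" "Y \<in> Lset A S" "Z \<in> Lset A S"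
    for X Y Z f g h using thick_D(4)[OF S tt[OF a(1-3)]] a(4,5) unfolding Lset_def by blast
  show "Y \<in> Lset A S" if a: "Dtri C f g h" "f \<in> hom C X Y" "g \<in> hom C Y Z" "X \<in> Lset A S" "Z \<in> Lset A S"
    for X Y Z f g h using thick_D(5)[OF S tt[OF a(1-3)]] a(4,5) unfolding Lset_def by blast
  show "summand C U V \<Longrightarrow> V \<in> Lset A S \<Longrightarrow> U \<in> Lset A S" for U V
  proof -
    assume "summand C U V" "V \<in> Lset A S"
    then obtain i p where ip: "i \<in> hom C U V" "p \<in> hom C V U" "Cmp C p i = Idm C U" unfolding summand_def by blast
    have "Cmp C (TenM C (Idm C A) p) (TenM C (Idm C A) i) = TenM C (Cmp C (Idm C A) (Idm C A)) (Cmp C p i)"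
      using TenM_comp[OF id_hom id_hom ip(1,2)] by simp
    also have "\<dots> = Idm C (Ten C A U)" using ip(3) id_l[OF id_hom] TenM_id by simp
    finally have "summand C (Ten C A U) (Ten C A V)"
      unfolding summand_def using TenM_hom[OF id_hom ip(1)] TenM_hom[OF id_hom ip(2)] by blast
    then show ?thesis using thick_D(6)[OF S] \<open>V \<in> Lset A S\<close> unfolding Lset_def by blast
  qed
qed

lemma Rset_thick: assumes S: "thick C S" and ne: "Rset A S \<noteq> {}" shows "thick C (Rset A S)"
proof (rule thick_I)
  show "Rset A S \<noteq> {}" by fact
  show "X \<in> Rset A S \<longleftrightarrow> Sh C X \<in> Rset A S" for X
    using thick_iso[OF S ThL] thick_D(2)[OF S] unfolding Rset_def by blast
  have tt: "Dtri C (TenM C f (Idm C A)) (TenM C g (Idm C A)) (Cmp C (ThL C X A) (TenM C h (Idm C A)))"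
     "TenM C f (Idm C A) \<in> hom C (Ten C X A) (Ten C Y A)" "TenM C g (Idm C A) \<in> hom C (Ten C Y A) (Ten C Z A)"
    if "Dtri C f g h" "f \<in> hom C X Y" "g \<in> hom C Y Z" for f g h X Y Z
    using dtri_ten[OF that dtri_shape[OF that]] TenM_hom[OF that(2) id_hom] TenM_hom[OF that(3) id_hom] by auto
  show "Z \<in> Rset A S" if a: "Dtri C f g h" "f \<in> hom C X Y" "g \<in> hom C Y Z" "X \<in> Rset A S" "Y \<in> Rset A S"
    for X Y Z f g h using thick_D(3)[OF S tt[OF a(1-3)]] a(4,5) unfolding Rset_def by blast
  show "X \<in> Rset A S" if a: "Dtri C f g h" "f \<in> hom C X Y" "g \<in> hom C Y Z" "Y \<in> Rset A S" "Z \<in> Rset A S"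
    for X Y Z f g h using thick_D(4)[OF S tt[OF a(1-3)]] a(4,5) unfolding Rset_def by blast
  show "Y \<in> Rset A S" if a: "Dtri C f g h" "f \<in> hom C X Y" "g \<in> hom C Y Z" "X \<in> Rset A S" "Z \<in> Rset A S"
    for X Y Z f g h using thick_D(5)[OF S tt[OF a(1-3)]] a(4,5) unfolding Rset_def by blast
  show "summand C U V \<Longrightarrow> V \<in> Rset A S \<Longrightarrow> U \<in> Rset A S" for U V
  proof -
    assume "summand C U V" "V \<in> Rset A S"
    then obtain i p where ip: "i \<in> hom C U V" "p \<in> hom C V U" "Cmp C p i = Idm C U" unfolding summand_def by blast
    have "Cmp C (TenM C p (Idm C A)) (TenM C i (Idm C A)) = TenM C (Cmp C p i) (Cmp C (Idm C A) (Idm C A))"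
      using TenM_comp[OF ip(1,2) id_hom id_hom] by simp
    also have "\<dots> = Idm C (Ten C U A)" using ip(3) id_l[OF id_hom] TenM_id by simp
    finally have "summand C (Ten C U A) (Ten C V A)"
      unfolding summand_def using TenM_hom[OF ip(1) id_hom] TenM_hom[OF ip(2) id_hom] by blast
    then show ?thesis using thick_D(6)[OF S] \<open>V \<in> Rset A S\<close> unfolding Rset_def by blast
  qed
qed

end

context MDC begin

lemma ti_thick: "thick_ideal C I \<Longrightarrow> thick C I" unfolding thick_ideal_def by blast
lemma ti_ne: "thick_ideal C I \<Longrightarrow> \<exists>x. x \<in> I" using thick_D(1)[OF ti_thick] by blast
lemma ti_iso: "thick_ideal C I \<Longrightarrow> u \<in> hom C X Y \<Longrightarrow> iso C u \<Longrightarrow> X \<in> I \<longleftrightarrow> Y \<in> I"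
  using thick_iso[OF ti_thick] by blast

lemma thick_ideal_UNIV: "thick_ideal C UNIV" unfolding thick_ideal_def using thick_UNIV by blast

lemma one_in: assumes "thick_ideal C I" shows "One C \<in> I \<longleftrightarrow> I = UNIV"
proof
  assume o: "One C \<in> I"
  have "X \<in> I" for X using thick_ideal_D(1)[OF assms o, of X] ti_iso[OF assms Lu(1) Lu(2), of X] by simp
  then show "I = UNIV" by blast
qed auto

lemma Lset_ideal: "thick_ideal C P \<Longrightarrow> P \<subseteq> Lset A P"
  unfolding Lset_def using thick_ideal_D(2) by blast
lemma Rset_ideal: "thick_ideal C P \<Longrightarrow> P \<subseteq> Rset A P"
  unfolding Rset_def using thick_ideal_D(1) by blast

lemma Lset_thick_ideal: assumes "thick_ideal C P" shows "thick C (Lset A P)"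
proof -
  obtain x where "x \<in> P" using ti_ne[OF assms] by blast
  then have "Lset A P \<noteq> {}" using Lset_ideal[OF assms] by blast
  then show ?thesis by (rule Lset_thick[OF ti_thick[OF assms]])
qed
lemma Rset_thick_ideal: assumes "thick_ideal C P" shows "thick C (Rset A P)"
proof -
  obtain x where "x \<in> P" using ti_ne[OF assms] by blast
  then have "Rset A P \<noteq> {}" using Rset_ideal[OF assms] by blast
  then show ?thesis by (rule Rset_thick[OF ti_thick[OF assms]])
qed

lemma ann_R: assumes P: "thick_ideal C P" and I: "thick_ideal C I"
  shows "thick_ideal C {Y. \<forall>X\<in>I. Ten C X Y \<in> P}"
proof -
  have eq: "{Y. \<forall>X\<in>I. Ten C X Y \<in> P} = \<Inter> ((\<lambda>X. Lset X P) ` I)" unfolding Lset_def by auto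
  have th: "thick C {Y. \<forall>X\<in>I. Ten C X Y \<in> P}" unfolding eq
    by (rule thick_Inter) (use Lset_thick_ideal[OF P] in auto)
  have "Ten C Z Y \<in> {Y. \<forall>X\<in>I. Ten C X Y \<in> P} \<and> Ten C Y Z \<in> {Y. \<forall>X\<in>I. Ten C X Y \<in> P}"
    if "Y \<in> {Y. \<forall>X\<in>I. Ten C X Y \<in> P}" for Y Z
  proof -
    have 1: "Ten C X (Ten C Z Y) \<in> P" if "X \<in> I" for X
    proof -
      have "Ten C (Ten C X Z) Y \<in> P" using \<open>Y \<in> _\<close> thick_ideal_D(1)[OF I that] by blast
      then show ?thesis using ti_iso[OF P Asc] by blast
    qed
    have 2: "Ten C X (Ten C Y Z) \<in> P" if "X \<in> I" for X
    proof -
      have "Ten C (Ten C X Y) Z \<in> P" using \<open>Y \<in> _\<close> thick_ideal_D(1)[OF P] that by blast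
      then show ?thesis using ti_iso[OF P Asc] by blast
    qed
    show ?thesis using 1 2 by blast
  qed
  then show ?thesis using th unfolding thick_ideal_def by blast
qed

lemma ann_L: assumes P: "thick_ideal C P" and J: "thick_ideal C J"
  shows "thick_ideal C {X. \<forall>Y\<in>J. Ten C X Y \<in> P}"
proof -
  have eq: "{X. \<forall>Y\<in>J. Ten C X Y \<in> P} = \<Inter> ((\<lambda>Y. Rset Y P) ` J)" unfolding Rset_def by auto
  have th: "thick C {X. \<forall>Y\<in>J. Ten C X Y \<in> P}" unfolding eq
    by (rule thick_Inter) (use Rset_thick_ideal[OF P] in auto)
  have "Ten C Z X \<in> {X. \<forall>Y\<in>J. Ten C X Y \<in> P} \<and> Ten C X Z \<in> {X. \<forall>Y\<in>J. Ten C X Y \<in> P}"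
    if "X \<in> {X. \<forall>Y\<in>J. Ten C X Y \<in> P}" for X Z
  proof -
    have 1: "Ten C (Ten C X Z) Y \<in> P" if "Y \<in> J" for Y
    proof -
      have "Ten C X (Ten C Z Y) \<in> P" using \<open>X \<in> _\<close> thick_ideal_D(2)[OF J that] by blast
      then show ?thesis using ti_iso[OF P Asc] by blast
    qed
    have 2: "Ten C (Ten C Z X) Y \<in> P" if "Y \<in> J" for Y
    proof -
      have "Ten C Z (Ten C X Y) \<in> P" using \<open>X \<in> _\<close> thick_ideal_D(2)[OF P] that by blast
      then show ?thesis using ti_iso[OF P Asc] by blast
    qed
    show ?thesis using 1 2 by blast
  qed
  then show ?thesis using th unfolding thick_ideal_def by blast
qed

lemma prod_gen: assumes P: "thick_ideal C P" and I: "thick_ideal C I" and J: "thick_ideal C J"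
  and IJ: "tens_set C I J \<subseteq> P"
  and X: "X \<in> ideal_gen C (P \<union> I)" and Y: "Y \<in> ideal_gen C (P \<union> J)"
  shows "Ten C X Y \<in> P"
proof -
  let ?J2 = "ideal_gen C (P \<union> J)"
  have "?J2 \<subseteq> {Y. \<forall>X\<in>I. Ten C X Y \<in> P}"
    apply (rule ideal_gen_min[OF ann_R[OF P I]])
    using IJ thick_ideal_D(2)[OF P] unfolding tens_set_def by blast
  then have "ideal_gen C (P \<union> I) \<subseteq> {X. \<forall>Y\<in>?J2. Ten C X Y \<in> P}"
    apply (intro ideal_gen_min[OF ann_L[OF P ideal_gen_ideal]])
    using thick_ideal_D(1)[OF P] by blast
  then show ?thesis using X Y by blast
qed

lemma prime_ti: "prime_ideal C P \<Longrightarrow> thick_ideal C P"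
  unfolding prime_ideal_def proper_ideal_def by blast

lemma prime_D: "prime_ideal C P \<Longrightarrow> thick_ideal C I \<Longrightarrow> thick_ideal C J \<Longrightarrow> tens_set C I J \<subseteq> P \<Longrightarrow> I \<subseteq> P \<or> J \<subseteq> P"
  unfolding prime_ideal_def by blast

lemma prime_elem: assumes pr: "prime_ideal C P" and h: "\<And>D. Ten C A (Ten C D B) \<in> P"
  shows "A \<in> P \<or> B \<in> P"
proof -
  have P: "thick_ideal C P" using pr prime_ti by blast
  define T where "T = {Y. \<forall>D. Ten C A (Ten C D Y) \<in> P}"
  have Teq: "T = \<Inter> ((\<lambda>D. Lset D (Lset A P)) ` UNIV)" unfolding T_def Lset_def by auto
  have LA: "thick C (Lset A P)" using Lset_thick_ideal[OF P] .
  have thT: "thick C T" unfolding Teq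
  proof (rule thick_Inter)
    fix S assume "S \<in> range (\<lambda>D. Lset D (Lset A P))"
    then obtain D where S: "S = Lset D (Lset A P)" by blast
    have "P \<subseteq> S" unfolding S Lset_def using thick_ideal_D(2)[OF P] by blast
    then show "thick C S" unfolding S using Lset_thick[OF LA] ti_ne[OF P] S by blast
  qed
  have T_id: "thick_ideal C T" unfolding thick_ideal_def
  proof (intro conjI thT ballI allI)
    fix Y Z assume Y: "Y \<in> T"
    show "Ten C Z Y \<in> T" unfolding T_def
    proof (rule CollectI, rule allI)
      fix D
      have "Ten C A (Ten C (Ten C D Z) Y) \<in> P" using Y unfolding T_def by simp
      then have "Ten C (Ten C D Z) Y \<in> Lset A P" unfolding Lset_def by simp
      moreover have "Ten C (Ten C D Z) Y \<in> Lset A P \<longleftrightarrow> Ten C D (Ten C Z Y) \<in> Lset A P"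
        by (rule thick_iso[OF LA Asc])
      ultimately show "Ten C A (Ten C D (Ten C Z Y)) \<in> P" unfolding Lset_def by simp
    qed
    show "Ten C Y Z \<in> T" unfolding T_def
    proof (rule CollectI, rule allI)
      fix D
      have "Ten C A (Ten C D Y) \<in> P" using Y unfolding T_def by simp
      then have "Ten C (Ten C A (Ten C D Y)) Z \<in> P" using thick_ideal_D(1)[OF P] by simp
      moreover have "Ten C (Ten C A (Ten C D Y)) Z \<in> P \<longleftrightarrow> Ten C A (Ten C (Ten C D Y) Z) \<in> P"
        by (rule ti_iso[OF P Asc])
      ultimately have "Ten C (Ten C D Y) Z \<in> Lset A P" unfolding Lset_def by simp
      moreover have "Ten C (Ten C D Y) Z \<in> Lset A P \<longleftrightarrow> Ten C D (Ten C Y Z) \<in> Lset A P"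
        by (rule thick_iso[OF LA Asc])
      ultimately show "Ten C A (Ten C D (Ten C Y Z)) \<in> P" unfolding Lset_def by simp
    qed
  qed
  have "B \<in> T" using h unfolding T_def by simp
  then have BT: "ideal_gen C {B} \<subseteq> T" using ideal_gen_min[OF T_id, of "{B}"] by simp
  have AS: "ideal_gen C {A} \<subseteq> {X. \<forall>Y\<in>ideal_gen C {B}. Ten C X Y \<in> P}"
  proof (rule ideal_gen_min[OF ann_L[OF P ideal_gen_ideal]])
    show "{A} \<subseteq> {X. \<forall>Y\<in>ideal_gen C {B}. Ten C X Y \<in> P}"
    proof (rule subsetI, rule CollectI, rule ballI)
      fix X Y assume "X \<in> {A}" "Y \<in> ideal_gen C {B}"
      then have XA: "X = A" by simp
      from \<open>Y \<in> _\<close> have "Y \<in> T" using BT by blast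
      then have "Ten C A (Ten C (One C) Y) \<in> P" unfolding T_def by simp
      then have "Ten C (One C) Y \<in> Lset A P" unfolding Lset_def by simp
      then have "Y \<in> Lset A P" using thick_iso[OF LA Lu] by blast
      then show "Ten C X Y \<in> P" unfolding Lset_def XA by simp
    qed
  qed
  have "tens_set C (ideal_gen C {A}) (ideal_gen C {B}) \<subseteq> P" using AS unfolding tens_set_def by blast
  then have "ideal_gen C {A} \<subseteq> P \<or> ideal_gen C {B} \<subseteq> P"
    using prime_D[OF pr ideal_gen_ideal ideal_gen_ideal] by blast
  moreover have "A \<in> ideal_gen C {A}" "B \<in> ideal_gen C {B}" using ideal_gen_sub by auto
  ultimately show ?thesis by blast
qed

lemma thick_gen_min: "thick C T \<Longrightarrow> S \<subseteq> T \<Longrightarrow> thick_gen C S \<subseteq> T" unfolding thick_gen_def by blast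

lemma gen_elem: assumes G: "thick_gen C {G} = UNIV" and P: "thick_ideal C P"
  and h: "Ten C A (Ten C G B) \<in> P" shows "Ten C A (Ten C D B) \<in> P"
proof -
  have LA: "thick C (Lset A P)" using Lset_thick_ideal[OF P] .
  have sub: "P \<subseteq> Rset B (Lset A P)" unfolding Rset_def Lset_def using thick_ideal_D(1,2)[OF P] by blast
  have "thick C (Rset B (Lset A P))" using Rset_thick[OF LA] sub ti_ne[OF P] by blast
  moreover have "G \<in> Rset B (Lset A P)" using h unfolding Rset_def Lset_def by blast
  ultimately have "thick_gen C {G} \<subseteq> Rset B (Lset A P)" using thick_gen_min by blast
  then have "D \<in> Rset B (Lset A P)" using G by auto
  then show ?thesis unfolding Rset_def Lset_def by simp
qed

end

context MDC begin

lemma thick_ideal_directed: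
  assumes ne: "F \<noteq> {}" and th: "\<And>T. T \<in> F \<Longrightarrow> thick_ideal C T"
    and dir: "\<And>T1 T2. T1 \<in> F \<Longrightarrow> T2 \<in> F \<Longrightarrow> \<exists>T3\<in>F. T1 \<subseteq> T3 \<and> T2 \<subseteq> T3"
  shows "thick_ideal C (\<Union>F)"
proof -
  have two: "\<exists>T\<in>F. X \<in> T \<and> Y \<in> T" if xy: "X \<in> \<Union>F" "Y \<in> \<Union>F" for X Y
  proof -
    obtain T1 T2 where "T1 \<in> F" "T2 \<in> F" "X \<in> T1" "Y \<in> T2" using xy by blast
    then show ?thesis using dir[of T1 T2] by blast
  qed
  have thk: "thick C T" if "T \<in> F" for T using th[OF that] ti_thick by blast
  have "thick C (\<Union>F)"
  proof (rule thick_I)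
    obtain T where T: "T \<in> F" using ne by blast
    obtain x where "x \<in> T" using ti_ne[OF th[OF T]] by blast
    then show "\<Union>F \<noteq> {}" using T by blast
    show "X \<in> \<Union>F \<longleftrightarrow> Sh C X \<in> \<Union>F" for X
    proof
      assume "X \<in> \<Union>F" then obtain T where "T \<in> F" "X \<in> T" by blast
      then show "Sh C X \<in> \<Union>F" using thick_D(2)[OF thk[of T]] by blast
    next
      assume "Sh C X \<in> \<Union>F" then obtain T where "T \<in> F" "Sh C X \<in> T" by blast
      then show "X \<in> \<Union>F" using thick_D(2)[OF thk[of T]] by blast
    qed
    show "Z \<in> \<Union>F" if a: "Dtri C f g h" "f \<in> hom C X Y" "g \<in> hom C Y Z" "X \<in> \<Union>F" "Y \<in> \<Union>F" for X Y Z f g h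
    proof -
      obtain T where "T \<in> F" "X \<in> T" "Y \<in> T" using two[OF a(4,5)] by blast
      then show ?thesis using thick_D(3)[OF thk a(1-3)] by blast
    qed
    show "X \<in> \<Union>F" if a: "Dtri C f g h" "f \<in> hom C X Y" "g \<in> hom C Y Z" "Y \<in> \<Union>F" "Z \<in> \<Union>F" for X Y Z f g h
    proof -
      obtain T where "T \<in> F" "Y \<in> T" "Z \<in> T" using two[OF a(4,5)] by blast
      then show ?thesis using thick_D(4)[OF thk a(1-3)] by blast
    qed
    show "Y \<in> \<Union>F" if a: "Dtri C f g h" "f \<in> hom C X Y" "g \<in> hom C Y Z" "X \<in> \<Union>F" "Z \<in> \<Union>F" for X Y Z f g h
    proof -
      obtain T where "T \<in> F" "X \<in> T" "Z \<in> T" using two[OF a(4,5)] by blast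
      then show ?thesis using thick_D(5)[OF thk a(1-3)] by blast
    qed
    show "A \<in> \<Union>F" if s: "summand C A B" "B \<in> \<Union>F" for A B
    proof -
      obtain T where "T \<in> F" "B \<in> T" using s by blast
      then show ?thesis using thick_D(6)[OF thk s(1)] by blast
    qed
  qed
  moreover have "Ten C A X \<in> \<Union>F \<and> Ten C X A \<in> \<Union>F" if aF: "A \<in> \<Union>F" for A X
  proof -
    obtain T where "T \<in> F" "A \<in> T" using aF by blast
    then show ?thesis using thick_ideal_D(1,2)[OF th] by blast
  qed
  ultimately show ?thesis unfolding thick_ideal_def by blast
qed

lemma exists_prime:
  assumes I: "thick_ideal C I" and Wne: "W \<noteq> {}" and IW: "I \<inter> W = {}"
    and msys: "\<And>a b. a \<in> W \<Longrightarrow> b \<in> W \<Longrightarrow>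
        \<exists>D w. w \<in> W \<and> (\<forall>P. thick_ideal C P \<longrightarrow> Ten C a (Ten C D b) \<in> P \<longrightarrow> w \<in> P)"
  shows "\<exists>P. prime_ideal C P \<and> I \<subseteq> P \<and> P \<inter> W = {}"
proof -
  define A where "A = {P. thick_ideal C P \<and> I \<subseteq> P \<and> P \<inter> W = {}}"
  have Ane: "A \<noteq> {}" using I IW unfolding A_def by blast
  have chn: "\<Union>Ch \<in> A" if chne: "Ch \<noteq> {}" and chc: "subset.chain A Ch" for Ch
  proof -
    have sub: "Ch \<subseteq> A" and lin: "\<And>X Y. X\<in>Ch \<Longrightarrow> Y\<in>Ch \<Longrightarrow> X \<subseteq> Y \<or> Y \<subseteq> X"
      using chc by (auto simp: subset_chain_def)
    have inA: "thick_ideal C T \<and> I \<subseteq> T \<and> T \<inter> W = {}" if "T \<in> Ch" for T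
      using sub that unfolding A_def by auto
    have "thick_ideal C (\<Union>Ch)"
    proof (rule thick_ideal_directed[OF chne])
      show "thick_ideal C T" if "T \<in> Ch" for T using inA[OF that] by simp
      show "\<exists>T3\<in>Ch. T1 \<subseteq> T3 \<and> T2 \<subseteq> T3" if t: "T1 \<in> Ch" "T2 \<in> Ch" for T1 T2
      proof (cases "T1 \<subseteq> T2")
        case True then show ?thesis using t by auto
      next
        case False then have "T2 \<subseteq> T1" using lin[OF t] by simp
        then show ?thesis using t by auto
      qed
    qed
    moreover have "I \<subseteq> \<Union>Ch"
    proof -
      obtain T where "T \<in> Ch" using chne by auto
      then show ?thesis using inA by auto
    qed
    moreover have "\<Union>Ch \<inter> W = {}" using inA by auto
    ultimately show ?thesis unfolding A_def by simp
  qed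
  obtain M where MA: "M \<in> A" and max0: "\<forall>X\<in>A. M \<subseteq> X \<longrightarrow> X = M"
    using subset_Zorn_nonempty[of A, OF Ane chn] by blast
  have max: "\<And>X. X \<in> A \<Longrightarrow> M \<subseteq> X \<Longrightarrow> X = M" using max0 by blast
  have M: "thick_ideal C M" "I \<subseteq> M" "M \<inter> W = {}" using MA unfolding A_def by blast+
  have ext: "ideal_gen C (M \<union> K) \<inter> W \<noteq> {}" if K: "thick_ideal C K" "\<not> K \<subseteq> M" for K
  proof
    assume dis: "ideal_gen C (M \<union> K) \<inter> W = {}"
    have "ideal_gen C (M \<union> K) \<in> A" unfolding A_def using ideal_gen_ideal dis M(2) ideal_gen_sub[of "M \<union> K"] by blast
    moreover have "M \<subseteq> ideal_gen C (M \<union> K)" using ideal_gen_sub[of "M \<union> K"] by blast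
    ultimately have "ideal_gen C (M \<union> K) = M" using max by blast
    then show False using ideal_gen_sub[of "M \<union> K"] that(2) by blast
  qed
  have "prime_ideal C M" unfolding prime_ideal_def proper_ideal_def
  proof (intro conjI allI impI)
    show "thick_ideal C M" by fact
    show "M \<noteq> UNIV" using Wne M(3) by blast
    fix I' J' assume h: "thick_ideal C I' \<and> thick_ideal C J' \<and> tens_set C I' J' \<subseteq> M"
    show "I' \<subseteq> M \<or> J' \<subseteq> M"
    proof (rule ccontr)
      assume "\<not> (I' \<subseteq> M \<or> J' \<subseteq> M)"
      then have nI: "\<not> I' \<subseteq> M" and nJ: "\<not> J' \<subseteq> M" by auto
      obtain a where a: "a \<in> ideal_gen C (M \<union> I')" "a \<in> W" using ext[OF _ nI] h by blast
      obtain b where b: "b \<in> ideal_gen C (M \<union> J')" "b \<in> W" using ext[OF _ nJ] h by blast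
      obtain D w where w: "w \<in> W" "\<And>P. thick_ideal C P \<Longrightarrow> Ten C a (Ten C D b) \<in> P \<Longrightarrow> w \<in> P"
        using msys[OF a(2) b(2)] by blast
      have "Ten C D b \<in> ideal_gen C (M \<union> J')" using thick_ideal_D(2)[OF ideal_gen_ideal b(1)] by blast
      then have "Ten C a (Ten C D b) \<in> M" using prod_gen[OF M(1) _ _ _ a(1)] h by blast
      then have "w \<in> M" using w(2)[OF M(1)] by blast
      then show False using w(1) M(3) by blast
    qed
  qed
  then show ?thesis using M by blast
qed

lemma prime_above: assumes "thick_ideal C I" "I \<noteq> UNIV" shows "\<exists>P. prime_ideal C P \<and> I \<subseteq> P"
proof -
  have "One C \<notin> I" using one_in[OF assms(1)] assms(2) by blast
  have oo: "Ten C (One C) (Ten C (One C) (One C)) \<in> P \<longrightarrow> One C \<in> P" if tP: "thick_ideal C P" for P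
  proof
    assume "Ten C (One C) (Ten C (One C) (One C)) \<in> P"
    then have "Ten C (One C) (One C) \<in> P" using ti_iso[OF tP Lu(1) Lu(2)] by blast
    then show "One C \<in> P" using ti_iso[OF tP Lu(1) Lu(2)] by blast
  qed
  have ms: "\<exists>D w. w \<in> {One C} \<and> (\<forall>P. thick_ideal C P \<longrightarrow> Ten C a (Ten C D b) \<in> P \<longrightarrow> w \<in> P)"
    if "a \<in> {One C}" "b \<in> {One C}" for a b
  proof -
    have "a = One C" "b = One C" using that by auto
    then show ?thesis using oo by blast
  qed
  have "\<exists>P. prime_ideal C P \<and> I \<subseteq> P \<and> P \<inter> {One C} = {}"
    by (rule exists_prime[OF assms(1)]) (use \<open>One C \<notin> I\<close> ms in auto)
  then show ?thesis by blast
qed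

end

context MDC begin

lemma ideal_gen_compact: assumes "x \<in> ideal_gen C S"
  shows "\<exists>F. finite F \<and> F \<subseteq> S \<and> x \<in> ideal_gen C F"
proof -
  let ?F = "{ideal_gen C F | F. finite F \<and> F \<subseteq> S}"
  have ti: "thick_ideal C (\<Union>?F)"
  proof (rule thick_ideal_directed)
    show "?F \<noteq> {}" by blast
    show "thick_ideal C T" if "T \<in> ?F" for T using that ideal_gen_ideal by blast
    show "\<exists>T3\<in>?F. T1 \<subseteq> T3 \<and> T2 \<subseteq> T3" if t: "T1 \<in> ?F" "T2 \<in> ?F" for T1 T2
    proof -
      obtain F1 F2 where F: "T1 = ideal_gen C F1" "finite F1" "F1 \<subseteq> S" "T2 = ideal_gen C F2" "finite F2" "F2 \<subseteq> S"
        using t by blast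
      have "ideal_gen C (F1 \<union> F2) \<in> ?F" using F by blast
      moreover have "T1 \<subseteq> ideal_gen C (F1 \<union> F2)" "T2 \<subseteq> ideal_gen C (F1 \<union> F2)"
        unfolding F(1,4) by (auto intro: ideal_gen_mono[THEN subsetD])
      ultimately show ?thesis by blast
    qed
  qed
  have "S \<subseteq> \<Union>?F"
  proof
    fix s assume "s \<in> S"
    then have "ideal_gen C {s} \<in> ?F" by blast
    moreover have "s \<in> ideal_gen C {s}" using ideal_gen_sub by blast
    ultimately show "s \<in> \<Union>?F" by blast
  qed
  then have "ideal_gen C S \<subseteq> \<Union>?F" using ideal_gen_min[OF ti] by blast
  then show ?thesis using assms by blast
qed

lemma zero_obj_hom: "is_zero_obj C Z \<Longrightarrow> hom C Z X = {Zerom C Z X}" "is_zero_obj C Z \<Longrightarrow> hom C X Z = {Zerom C X Z}"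
  unfolding is_zero_obj_def by auto

lemma iso_id: "iso C (Idm C X)"
proof -
  have "Dom C (Idm C X) = X" "Cod C (Idm C X) = X" using id_hom[of X] unfolding hom_def by auto
  then show ?thesis unfolding iso_def using id_hom id_l[OF id_hom] by auto
qed

lemma iso_I: assumes "u \<in> hom C X Y" "k \<in> hom C Y X" "Cmp C k u = Idm C X" "Cmp C u k = Idm C Y"
  shows "iso C u"
  using assms unfolding iso_def hom_def by auto

lemma dtri_zero_id:
  assumes Oz: "is_zero_obj C Oz"
  shows "Dtri C (Zerom C Oz W) (Idm C W) (Zerom C W (Sh C Oz))"
proof -
  obtain Z' where Z': "is_zero_obj C Z'" using zero_obj_ex by blast
  let ?n = "Negm C (ShM C (Zerom C Oz W))"
  have n: "?n \<in> hom C (Sh C Oz) (Sh C W)" using neg_hom ShM_hom zero_hom by blast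
  have hSO: "hom C (Sh C Oz) (Sh C Oz) = {ShM C (Zerom C Oz Oz)}"
  proof -
    have "hom C (Sh C Oz) (Sh C Oz) = ShM C ` hom C Oz Oz" using ShM_bij[of Oz Oz] unfolding bij_betw_def by simp
    then show ?thesis using zero_obj_hom(1)[OF Oz, of Oz] by simp
  qed
  let ?w = "Zerom C Z' (Sh C Oz)"
  have w: "?w \<in> hom C Z' (Sh C Oz)" by (rule zero_hom)
  have isow: "iso C ?w"
  proof (rule iso_I[OF w zero_hom])
    have "Cmp C (Zerom C (Sh C Oz) Z') ?w \<in> hom C Z' Z'" "Idm C Z' \<in> hom C Z' Z'"
      using comp_hom[OF w zero_hom] id_hom by auto
    then show "Cmp C (Zerom C (Sh C Oz) Z') ?w = Idm C Z'" using zero_obj_hom(1)[OF Z'] by auto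
    have "Cmp C ?w (Zerom C (Sh C Oz) Z') \<in> hom C (Sh C Oz) (Sh C Oz)" "Idm C (Sh C Oz) \<in> hom C (Sh C Oz) (Sh C Oz)"
      using comp_hom[OF zero_hom w] id_hom by auto
    then show "Cmp C ?w (Zerom C (Sh C Oz) Z') = Idm C (Sh C Oz)" using hSO by auto
  qed
  have d0: "Dtri C (Idm C W) (Zerom C W Z') (Zerom C Z' (Sh C W))" using TR1id[OF Z'] .
  have c3: "Cmp C (ShM C (Idm C W)) (Zerom C Z' (Sh C W)) = Cmp C ?n ?w"
  proof -
    have "Cmp C ?n ?w \<in> hom C Z' (Sh C W)" using comp_hom[OF w n] .
    moreover have "Cmp C (ShM C (Idm C W)) (Zerom C Z' (Sh C W)) \<in> hom C Z' (Sh C W)"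
      using comp_hom[OF zero_hom ShM_hom[OF id_hom]] .
    ultimately show ?thesis using zero_obj_hom(1)[OF Z'] by auto
  qed
  have c2: "Cmp C ?w (Zerom C W Z') = Cmp C (Zerom C W (Sh C Oz)) (Idm C W)"
    using comp_zeroL[OF zero_hom] id_r[OF zero_hom] by simp
  have "Dtri C (Idm C W) (Zerom C W (Sh C Oz)) ?n"
    apply (rule tr_iso[rule_format, of "Idm C W" "Zerom C W Z'" "Zerom C Z' (Sh C W)" W W Z'
          "Idm C W" W W "Zerom C W (Sh C Oz)" "Sh C Oz" ?n "Idm C W" "Idm C W" ?w])
    using d0 id_hom zero_hom n w iso_id isow c2 c3 by auto
  then show ?thesis using tr_rot by blast
qed

lemma factor_lemma:
  assumes d: "Dtri C f g h" and f: "f \<in> hom C X Y" and g: "g \<in> hom C Y Z"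
    and v: "v \<in> hom C Y W" and vf: "Cmp C v f = Zerom C X W"
  shows "\<exists>w. w \<in> hom C Z W \<and> Cmp C w g = v"
proof -
  obtain Oz where Oz: "is_zero_obj C Oz" using zero_obj_ex by blast
  have h: "h \<in> hom C Z (Sh C X)" using dtri_shape[OF d f g] .
  have d2: "Dtri C (Zerom C Oz W) (Idm C W) (Zerom C W (Sh C Oz))" using dtri_zero_id[OF Oz] .
  have sq: "Cmp C v f = Cmp C (Zerom C Oz W) (Zerom C X Oz)" using vf comp_zeroL[OF zero_hom] by simp
  obtain w where w: "w \<in> hom C Z W" "Cmp C w g = Cmp C (Idm C W) v"
    using tr_3[rule_format, of f g h X Y Z "Zerom C Oz W" "Idm C W" "Zerom C W (Sh C Oz)" Oz W W "Zerom C X Oz" v]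
      d f g h d2 zero_hom id_hom v sq by blast
  then show ?thesis using id_l[OF v] by auto
qed

lemma join_lemma: assumes S: "thick C S" and a: "a \<in> S" and b: "b \<in> S"
  shows "\<exists>z\<in>S. \<forall>T. thick C T \<longrightarrow> z \<in> T \<longrightarrow> a \<in> T \<and> b \<in> T"
proof -
  obtain X u where u: "u \<in> hom C (Sh C X) a" "iso C u" using Sh_surj by blast
  obtain Z g h where gh: "g \<in> hom C b Z" "h \<in> hom C Z (Sh C X)" "Dtri C (Zerom C X b) g h"
    using tr_ext zero_hom by blast
  have XS: "X \<in> S" using thick_iso[OF S u] a thick_D(2)[OF S] by blast
  have ZS: "Z \<in> S" using thick_D(3)[OF S gh(3) zero_hom gh(1) XS b] .
  have "a \<in> T \<and> b \<in> T" if T: "thick C T" "Z \<in> T" for T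
  proof -
    obtain r where r: "r \<in> hom C Z b" "Cmp C r g = Idm C b"
      using factor_lemma[OF gh(3) zero_hom gh(1) id_hom] id_l[OF zero_hom] by blast
    have "summand C b Z" unfolding summand_def using r gh(1) by blast
    then have bT: "b \<in> T" using thick_D(6)[OF T(1)] T(2) by blast
    have "X \<in> T" using thick_D(4)[OF T(1) gh(3) zero_hom gh(1) bT T(2)] .
    then have "Sh C X \<in> T" using thick_D(2)[OF T(1)] by blast
    then have "a \<in> T" using thick_iso[OF T(1) u] by blast
    then show ?thesis using bT by blast
  qed
  then show ?thesis using ZS by blast
qed

lemma join_finite: assumes S: "thick C S" and F: "finite F" "F \<subseteq> S"
  shows "\<exists>z\<in>S. \<forall>T. thick C T \<longrightarrow> z \<in> T \<longrightarrow> F \<subseteq> T"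
  using F
proof (induction F rule: finite_induct)
  case empty
  then show ?case using thick_D(1)[OF S] by blast
next
  case (insert x F)
  then obtain z where z: "z \<in> S" "\<And>T. thick C T \<Longrightarrow> z \<in> T \<Longrightarrow> F \<subseteq> T" by blast
  have "x \<in> S" using insert by blast
  then obtain z' where z': "z' \<in> S" "\<And>T. thick C T \<Longrightarrow> z' \<in> T \<Longrightarrow> x \<in> T \<and> z \<in> T"
    using join_lemma[OF S _ z(1)] by blast
  show ?case using z z' by blast
qed

end

context MDC begin

fun prodset :: "'o list \<Rightarrow> 'o set" where
  "prodset [] = {}"
| "prodset [b] = {b}"
| "prodset (b # c # bs) = {Ten C b (Ten C D r) | D r. r \<in> prodset (c # bs)}"

lemma prodset_ne: "bs \<noteq> [] \<Longrightarrow> prodset bs \<noteq> {}"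
  by (induction bs rule: prodset.induct) auto

lemma prodset_in: "thick_ideal C P \<Longrightarrow> B \<in> set bs \<Longrightarrow> B \<in> P \<Longrightarrow> prodset bs \<subseteq> P"
proof (induction bs rule: prodset.induct)
  case 1 then show ?case by simp
next
  case (2 b) then show ?case by simp
next
  case (3 b c bs)
  show ?case
  proof (cases "B = b")
    case True
    then have "b \<in> P" using 3 by simp
    then show ?thesis using thick_ideal_D(1)[OF 3(2)] by auto
  next
    case False
    then have "B \<in> set (c # bs)" using 3(3) by simp
    then have "prodset (c # bs) \<subseteq> P" using 3 by blast
    then show ?thesis using thick_ideal_D(2)[OF 3(2)] by auto
  qed
qed

lemma prodset_prime: "prime_ideal C P \<Longrightarrow> prodset bs \<subseteq> P \<Longrightarrow> bs \<noteq> [] \<Longrightarrow> \<exists>B\<in>set bs. B \<in> P"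
proof (induction bs rule: prodset.induct)
  case 1 then show ?case by simp
next
  case (2 b) then show ?case by simp
next
  case (3 b c bs)
  show ?case
  proof (cases "b \<in> P")
    case True then show ?thesis by simp
  next
    case False
    have "r \<in> P" if r: "r \<in> prodset (c # bs)" for r
    proof -
      have "Ten C b (Ten C D r) \<in> P" for D using 3(3) r by auto
      then show ?thesis using prime_elem[OF 3(2)] False by blast
    qed
    then have "\<exists>B\<in>set (c # bs). B \<in> P" using 3 by blast
    then show ?thesis by simp
  qed
qed

lemma prod_avoid: assumes F: "finite F" "F \<noteq> {}" and Q: "prime_ideal C Q" and FQ: "F \<inter> Q = {}"
  shows "\<exists>x. x \<notin> Q \<and> (\<forall>P. prime_ideal C P \<and> F \<inter> P \<noteq> {} \<longrightarrow> x \<in> P)"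
proof -
  obtain bs where bs: "set bs = F" using finite_list[OF F(1)] by blast
  have ne: "bs \<noteq> []" using bs F(2) by auto
  have "\<not> prodset bs \<subseteq> Q" using prodset_prime[OF Q _ ne] FQ bs by blast
  then obtain x where x: "x \<in> prodset bs" "x \<notin> Q" by blast
  have "x \<in> P" if pp: "prime_ideal C P" "F \<inter> P \<noteq> {}" for P
  proof -
    obtain B where "B \<in> F" "B \<in> P" using pp(2) by blast
    then show ?thesis using prodset_in[OF prime_ti[OF pp(1)], of B bs] bs x(1) by blast
  qed
  then show ?thesis using x(2) by blast
qed

definition Vc where "Vc S = Spc C \<inter> \<Inter> (Vsupp C ` S)"

lemma Vc_mem: "P \<in> Vc S \<longleftrightarrow> prime_ideal C P \<and> S \<inter> P = {}"
  unfolding Vc_def Vsupp_def Spc_def by auto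

lemma Vc_anti: "S \<subseteq> T \<Longrightarrow> Vc T \<subseteq> Vc S" using Vc_mem by blast

lemma noeth_fin: assumes N: "spc_noetherian C"
  shows "\<exists>F. finite F \<and> F \<subseteq> S \<and> Vc F = Vc S"
proof (rule ccontr)
  assume na: "\<not> ?thesis"
  have step: "\<exists>s. s \<in> S \<and> Vc (insert s F) \<noteq> Vc F" if "finite F" "F \<subseteq> S" for F
  proof -
    have "Vc F \<noteq> Vc S" using na that by blast
    moreover have "Vc S \<subseteq> Vc F" using Vc_anti that(2) by blast
    ultimately obtain P where P: "P \<in> Vc F" "P \<notin> Vc S" by blast
    then obtain s where s: "s \<in> S" "s \<in> P" unfolding Vc_mem by blast
    then have "P \<notin> Vc (insert s F)" unfolding Vc_mem by blast
    then show ?thesis using s P by blast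
  qed
  define nxt where "nxt F = insert (SOME s. s \<in> S \<and> Vc (insert s F) \<noteq> Vc F) F" for F
  define Fs where "Fs n = (nxt ^^ n) {}" for n
  have Fsuc: "Fs (Suc n) = nxt (Fs n)" for n unfolding Fs_def by simp
  have Fs_fin: "finite (Fs n) \<and> Fs n \<subseteq> S" for n
  proof (induction n)
    case 0 then show ?case unfolding Fs_def by simp
  next
    case (Suc n)
    have "finite (Fs n)" "Fs n \<subseteq> S" using Suc by blast+
    from someI_ex[OF step[OF this]]
    have "(SOME s. s \<in> S \<and> Vc (insert s (Fs n)) \<noteq> Vc (Fs n)) \<in> S" by blast
    then show ?case using Suc unfolding Fsuc nxt_def by simp
  qed
  have strict: "Vc (Fs (Suc n)) \<noteq> Vc (Fs n)" for n
  proof -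
    have "finite (Fs n)" "Fs n \<subseteq> S" using Fs_fin by blast+
    from someI_ex[OF step[OF this]]
    have "Vc (insert (SOME s. s \<in> S \<and> Vc (insert s (Fs n)) \<noteq> Vc (Fs n)) (Fs n)) \<noteq> Vc (Fs n)" by blast
    then show ?thesis unfolding Fsuc nxt_def .
  qed
  have dec: "Vc (Fs (Suc n)) \<subseteq> Vc (Fs n)" for n
  proof -
    have "Fs n \<subseteq> Fs (Suc n)" unfolding Fsuc nxt_def by auto
    then show ?thesis by (rule Vc_anti)
  qed
  have cl: "spc_closed C (Vc (Fs n))" for n unfolding spc_closed_def Vc_def by (rule exI[of _ "Fs n"]) (rule refl)
  have "(\<forall>n. spc_closed C (Vc (Fs n))) \<and> (\<forall>n. Vc (Fs (Suc n)) \<subseteq> Vc (Fs n))" using cl dec by blast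
  then have "\<exists>N. \<forall>n\<ge>N. Vc (Fs n) = Vc (Fs N)"
    using N unfolding spc_noetherian_def by (rule_tac allE[of _ "\<lambda>n. Vc (Fs n)"]) simp_all
  then obtain N where "\<forall>n\<ge>N. Vc (Fs n) = Vc (Fs N)" by blast
  moreover have "N \<le> Suc N" by simp
  ultimately have "Vc (Fs (Suc N)) = Vc (Fs N)" by blast
  then show False using strict by blast
qed

inductive wd :: "'o set \<Rightarrow> 'o \<Rightarrow> 'o \<Rightarrow> 'o set \<Rightarrow> bool" for S G where
  wd_base: "s \<in> S \<Longrightarrow> wd S G s {s}"
| wd_step: "wd S G a F1 \<Longrightarrow> wd S G b F2 \<Longrightarrow> wd S G (Ten C a (Ten C G b)) (F1 \<union> F2)"

lemma wd_fin: "wd S G w F \<Longrightarrow> finite F \<and> F \<subseteq> S"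
  by (induction rule: wd.induct) auto

lemma wd_prime: assumes G: "thick_gen C {G} = UNIV"
  shows "wd S G w F \<Longrightarrow> prime_ideal C P \<Longrightarrow> w \<in> P \<Longrightarrow> F \<inter> P \<noteq> {}"
proof (induction rule: wd.induct)
  case (wd_base s) then show ?case by simp
next
  case (wd_step a F1 b F2)
  have "Ten C a (Ten C D b) \<in> P" for D using gen_elem[OF G prime_ti[OF wd_step(5)] wd_step(6)] .
  then have "a \<in> P \<or> b \<in> P" using prime_elem[OF wd_step(5)] by blast
  then show ?case using wd_step by blast
qed

lemma gen_fin: assumes G: "thick_gen C {G} = UNIV" and Sne: "S \<noteq> {}"
  and np: "\<And>P. prime_ideal C P \<Longrightarrow> S \<inter> P \<noteq> {}"
  shows "\<exists>F. finite F \<and> F \<subseteq> S \<and> (\<forall>P. prime_ideal C P \<longrightarrow> F \<inter> P \<noteq> {})"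
proof -
  let ?W = "{w. \<exists>F. wd S G w F}"
  let ?Z0 = "ideal_gen C {}"
  have SW: "S \<subseteq> ?W" using wd_base by blast
  have "?Z0 \<inter> ?W \<noteq> {}"
  proof
    assume dis: "?Z0 \<inter> ?W = {}"
    have ms: "\<exists>D w. w \<in> ?W \<and> (\<forall>P. thick_ideal C P \<longrightarrow> Ten C a (Ten C D b) \<in> P \<longrightarrow> w \<in> P)"
      if "a \<in> ?W" "b \<in> ?W" for a b
    proof -
      have "Ten C a (Ten C G b) \<in> ?W" using that wd_step by blast
      then show ?thesis by blast
    qed
    obtain P where "prime_ideal C P" "P \<inter> ?W = {}"
      using exists_prime[OF ideal_gen_ideal _ dis ms] Sne SW by blast
    then show False using np SW by blast
  qed
  then obtain w F where w: "w \<in> ?Z0" "wd S G w F" by blast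
  have "F \<inter> P \<noteq> {}" if "prime_ideal C P" for P
  proof -
    have "?Z0 \<subseteq> P" using ideal_gen_min[OF prime_ti[OF that]] by blast
    then show ?thesis using wd_prime[OF G w(2) that] w(1) by blast
  qed
  then show ?thesis using wd_fin[OF w(2)] by blast
qed

end

context MDC begin

lemma Spc_mem: "P \<in> Spc C \<longleftrightarrow> prime_ideal C P" unfolding Spc_def by simp
lemma Vc_Spc: "Vc F \<subseteq> Spc C" unfolding Vc_def by blast
lemma Vc_empty: "Vc {} = Spc C" unfolding Vc_def by simp

lemma a_to_b:
  assumes "proper_ideal C I" "proper_ideal C J" "coprime C I J" "complementary C I J"
  shows "\<exists>I J. principal_ideal C I \<and> principal_ideal C J \<and> proper_ideal C I \<and> proper_ideal C J \<and>
                       coprime C I J \<and> complementary C I J"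
proof -
  have I: "thick_ideal C I" "I \<noteq> UNIV" and J: "thick_ideal C J" "J \<noteq> UNIV"
    using assms(1,2) unfolding proper_ideal_def by blast+
  have "One C \<in> ideal_gen C (I \<union> J)" using assms(3) unfolding coprime_def by blast
  then obtain F where F: "finite F" "F \<subseteq> I \<union> J" "One C \<in> ideal_gen C F"
    using ideal_gen_compact by blast
  obtain A where A: "A \<in> I" "\<And>T. thick C T \<Longrightarrow> A \<in> T \<Longrightarrow> F \<inter> I \<subseteq> T"
    using join_finite[OF ti_thick[OF I(1)], of "F \<inter> I"] F(1) by blast
  obtain B where B: "B \<in> J" "\<And>T. thick C T \<Longrightarrow> B \<in> T \<Longrightarrow> F \<inter> J \<subseteq> T"
    using join_finite[OF ti_thick[OF J(1)], of "F \<inter> J"] F(1) by blast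
  let ?I = "ideal_gen C {A}" and ?J = "ideal_gen C {B}"
  have IA: "?I \<subseteq> I" using ideal_gen_min[OF I(1)] A(1) by blast
  have JB: "?J \<subseteq> J" using ideal_gen_min[OF J(1)] B(1) by blast
  have p1: "proper_ideal C ?I" unfolding proper_ideal_def using ideal_gen_ideal IA I(2) by blast
  have p2: "proper_ideal C ?J" unfolding proper_ideal_def using ideal_gen_ideal JB J(2) by blast
  let ?T = "ideal_gen C (?I \<union> ?J)"
  have Tt: "thick_ideal C ?T" by (rule ideal_gen_ideal)
  have "A \<in> ?T" "B \<in> ?T" using ideal_gen_sub[of "{A}"] ideal_gen_sub[of "{B}"] ideal_gen_sub[of "?I \<union> ?J"] by blast+
  then have "F \<inter> I \<subseteq> ?T" "F \<inter> J \<subseteq> ?T" using A(2) B(2) ti_thick[OF Tt] by blast+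
  then have "F \<subseteq> ?T" using F(2) by blast
  then have "One C \<in> ?T" using ideal_gen_min[OF Tt] F(3) by blast
  then have cop: "coprime C ?I ?J" unfolding coprime_def using one_in[OF Tt] by blast
  have comp: "complementary C ?I ?J" using assms(4) IA JB unfolding complementary_def by blast
  have "principal_ideal C ?I" "principal_ideal C ?J" unfolding principal_ideal_def by blast+
  then show ?thesis using p1 p2 cop comp by blast
qed

lemma b_to_c:
  assumes p: "principal_ideal C I" "principal_ideal C J" and pr: "proper_ideal C I" "proper_ideal C J"
    and cop: "coprime C I J" and comp: "complementary C I J"
  shows "spc_disconnected C"
proof -
  obtain A B where AB: "I = ideal_gen C {A}" "J = ideal_gen C {B}" using p unfolding principal_ideal_def by blast
  have I: "thick_ideal C I" "I \<noteq> UNIV" and J: "thick_ideal C J" "J \<noteq> UNIV"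
    using pr unfolding proper_ideal_def by blast+
  have AI: "A \<in> I" "B \<in> J" using AB ideal_gen_sub by blast+
  have AP: "I \<subseteq> P" if "thick_ideal C P" "A \<in> P" for P using AB(1) ideal_gen_min[OF that(1)] that(2) by blast
  have BP: "J \<subseteq> P" if "thick_ideal C P" "B \<in> P" for P using AB(2) ideal_gen_min[OF that(1)] that(2) by blast
  let ?Z1 = "Vsupp C A" and ?Z2 = "Vsupp C B"
  have cl1: "spc_closed C ?Z1" unfolding spc_closed_def
    by (rule exI[of _ "{A}"]) (auto simp: Vsupp_def)
  have cl2: "spc_closed C ?Z2" unfolding spc_closed_def
    by (rule exI[of _ "{B}"]) (auto simp: Vsupp_def)
  have un: "?Z1 \<union> ?Z2 = Spc C"
  proof
    show "?Z1 \<union> ?Z2 \<subseteq> Spc C" unfolding Vsupp_def by blast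
    show "Spc C \<subseteq> ?Z1 \<union> ?Z2"
    proof
      fix P assume P: "P \<in> Spc C"
      show "P \<in> ?Z1 \<union> ?Z2"
      proof (rule ccontr)
        assume "P \<notin> ?Z1 \<union> ?Z2"
        then have "A \<in> P" "B \<in> P" using P unfolding Vsupp_def by blast+
        have Pt: "thick_ideal C P" using P prime_ti Spc_mem by blast
        have "I \<union> J \<subseteq> P" using AP[OF Pt \<open>A \<in> P\<close>] BP[OF Pt \<open>B \<in> P\<close>] by blast
        then have "UNIV \<subseteq> P" using ideal_gen_min[OF Pt] cop unfolding coprime_def by blast
        then show False using P Spc_mem unfolding prime_ideal_def proper_ideal_def by blast
      qed
    qed
  qed
  have dis: "?Z1 \<inter> ?Z2 = {}"
  proof (rule ccontr)
    assume "?Z1 \<inter> ?Z2 \<noteq> {}"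
    then obtain P where P: "P \<in> Spc C" "A \<notin> P" "B \<notin> P" unfolding Vsupp_def by blast
    have pP: "prime_ideal C P" using P Spc_mem by blast
    have "I \<inter> J \<subseteq> P" using comp P(1) unfolding complementary_def prime_radical_def by blast
    moreover have "tens_set C I J \<subseteq> I \<inter> J" unfolding tens_set_def using thick_ideal_D(1)[OF I(1)] thick_ideal_D(2)[OF J(1)] by blast
    ultimately have "I \<subseteq> P \<or> J \<subseteq> P" using prime_D[OF pP I(1) J(1)] by blast
    then show False using AI P by blast
  qed
  have n1: "?Z1 \<noteq> Spc C"
  proof -
    obtain P where "prime_ideal C P" "I \<subseteq> P" using prime_above[OF I] by blast
    then have "P \<in> Spc C" "P \<notin> ?Z1" using AI Spc_mem unfolding Vsupp_def by blast+
    then show ?thesis by blast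
  qed
  have n2: "?Z2 \<noteq> Spc C"
  proof -
    obtain P where "prime_ideal C P" "J \<subseteq> P" using prime_above[OF J] by blast
    then have "P \<in> Spc C" "P \<notin> ?Z2" using AI Spc_mem unfolding Vsupp_def by blast+
    then show ?thesis by blast
  qed
  show ?thesis unfolding spc_disconnected_def using cl1 cl2 n1 n2 dis un by blast
qed

lemma coprime_helper:
  assumes F: "finite F" "Vc F \<noteq> Spc C" and Q: "Q \<in> Vc F" and Z': "Z' \<subseteq> Spc C" "Z' \<inter> Vc F = {}"
    and sub: "\<Inter>Z' \<subseteq> Q"
  shows False
proof -
  have Fne: "F \<noteq> {}" using F(2) Vc_empty by blast
  have pQ: "prime_ideal C Q" "F \<inter> Q = {}" using Q Vc_mem by blast+
  obtain x where x: "x \<notin> Q" "\<And>P. prime_ideal C P \<Longrightarrow> F \<inter> P \<noteq> {} \<Longrightarrow> x \<in> P"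
    using prod_avoid[OF F(1) Fne pQ] by blast
  have "x \<in> P" if "P \<in> Z'" for P
  proof -
    have pP: "prime_ideal C P" using that Z'(1) Spc_mem by blast
    have "P \<notin> Vc F" using that Z'(2) by blast
    then have "F \<inter> P \<noteq> {}" using pP Vc_mem by blast
    then show ?thesis using x(2) pP by blast
  qed
  then have "x \<in> \<Inter>Z'" by blast
  then show False using sub x(1) by blast
qed

lemma c_to_a_fin:
  assumes un: "Vc F1 \<union> Vc F2 = Spc C" and dis: "Vc F1 \<inter> Vc F2 = {}"
    and n1: "Vc F1 \<noteq> Spc C" and n2: "Vc F2 \<noteq> Spc C" and fin: "finite F1" "finite F2"
  shows "\<exists>I J. proper_ideal C I \<and> proper_ideal C J \<and> coprime C I J \<and> complementary C I J"
proof -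
  let ?I = "\<Inter>(Vc F1)" and ?J = "\<Inter>(Vc F2)"
  have ne1: "Vc F1 \<noteq> {}" using un n2 by blast
  have ne2: "Vc F2 \<noteq> {}" using un n1 by blast
  have prp: "prime_ideal C P" if "P \<in> Vc F" for P F using that Vc_mem by blast
  have t1: "thick_ideal C ?I" by (rule thick_ideal_Inter) (use prp prime_ti in blast)
  have t2: "thick_ideal C ?J" by (rule thick_ideal_Inter) (use prp prime_ti in blast)
  have pr1: "proper_ideal C ?I"
  proof -
    obtain P where P: "P \<in> Vc F1" using ne1 by blast
    then have "?I \<subseteq> P" by blast
    moreover have "P \<noteq> UNIV" using prp[OF P] unfolding prime_ideal_def proper_ideal_def by blast
    ultimately show ?thesis using t1 unfolding proper_ideal_def by blast
  qed
  have pr2: "proper_ideal C ?J"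
  proof -
    obtain P where P: "P \<in> Vc F2" using ne2 by blast
    then have "?J \<subseteq> P" by blast
    moreover have "P \<noteq> UNIV" using prp[OF P] unfolding prime_ideal_def proper_ideal_def by blast
    ultimately show ?thesis using t2 unfolding proper_ideal_def by blast
  qed
  have comp: "complementary C ?I ?J" unfolding complementary_def prime_radical_def
  proof
    fix x assume "x \<in> ?I \<inter> ?J"
    then show "x \<in> \<Inter>(Spc C)" using un by blast
  qed
  have cop: "coprime C ?I ?J" unfolding coprime_def
  proof (rule ccontr)
    let ?K = "ideal_gen C (?I \<union> ?J)"
    assume "?K \<noteq> UNIV"
    then obtain Q where Q: "prime_ideal C Q" "?K \<subseteq> Q" using prime_above[OF ideal_gen_ideal] by blast
    have IJQ: "?I \<subseteq> Q" "?J \<subseteq> Q" using Q(2) ideal_gen_sub[of "?I \<union> ?J"] by blast+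
    have "Q \<in> Spc C" using Q Spc_mem by blast
    then have "Q \<in> Vc F1 \<or> Q \<in> Vc F2" using un by blast
    then show False
    proof
      assume "Q \<in> Vc F1"
      then show False using coprime_helper[OF fin(1) n1 _ Vc_Spc _ IJQ(2)] dis by blast
    next
      assume "Q \<in> Vc F2"
      then show False using coprime_helper[OF fin(2) n2 _ Vc_Spc _ IJQ(1)] dis by blast
    qed
  qed
  show ?thesis using pr1 pr2 cop comp by blast
qed

lemma closed_Vc: "spc_closed C Z \<Longrightarrow> \<exists>S. Z = Vc S" unfolding spc_closed_def Vc_def by blast

lemma c_to_a:
  assumes c: "spc_disconnected C" and h: "(\<exists>G. thick_gen C {G} = UNIV) \<or> spc_noetherian C"
  shows "\<exists>I J. proper_ideal C I \<and> proper_ideal C J \<and> coprime C I J \<and> complementary C I J"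
proof -
  obtain Z1 Z2 where Z: "spc_closed C Z1" "spc_closed C Z2" "Z1 \<noteq> Spc C" "Z2 \<noteq> Spc C"
      "Z1 \<inter> Z2 = {}" "Z1 \<union> Z2 = Spc C"
    using c unfolding spc_disconnected_def by blast
  obtain S1 S2 where S: "Z1 = Vc S1" "Z2 = Vc S2" using closed_Vc Z(1,2) by metis
  have "\<exists>F1 F2. finite F1 \<and> finite F2 \<and> Vc F1 = Z1 \<and> Vc F2 = Z2"
    using h
  proof
    assume "\<exists>G. thick_gen C {G} = UNIV"
    then obtain G where G: "thick_gen C {G} = UNIV" by blast
    have Sne: "S1 \<union> S2 \<noteq> {}"
    proof
      assume "S1 \<union> S2 = {}"
      then have "S1 = {}" by blast
      then have "Z1 = Spc C" using S(1) Vc_empty by simp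
      then show False using Z(3) by blast
    qed
    have np: "(S1 \<union> S2) \<inter> P \<noteq> {}" if "prime_ideal C P" for P
    proof
      assume "(S1 \<union> S2) \<inter> P = {}"
      then have "S1 \<inter> P = {}" "S2 \<inter> P = {}" by blast+
      then have "P \<in> Vc S1" "P \<in> Vc S2" using Vc_mem that by blast+
      then have "P \<in> Z1" "P \<in> Z2" using S by simp_all
      then show False using Z(5) by blast
    qed
    obtain F where F: "finite F" "F \<subseteq> S1 \<union> S2" "\<And>P. prime_ideal C P \<Longrightarrow> F \<inter> P \<noteq> {}"
      using gen_fin[OF G Sne np] by blast
    let ?F1 = "F \<inter> S1" and ?F2 = "F \<inter> S2"
    have "?F1 \<subseteq> S1" "?F2 \<subseteq> S2" by blast+
    then have sup1: "Z1 \<subseteq> Vc ?F1" and sup2: "Z2 \<subseteq> Vc ?F2" using S Vc_anti by simp_all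
    have disF: "Vc ?F1 \<inter> Vc ?F2 = {}"
    proof (rule ccontr)
      assume "Vc ?F1 \<inter> Vc ?F2 \<noteq> {}"
      then obtain P where "P \<in> Vc ?F1" "P \<in> Vc ?F2" by blast
      then have "prime_ideal C P" "?F1 \<inter> P = {}" "?F2 \<inter> P = {}" unfolding Vc_mem by blast+
      moreover have "F = ?F1 \<union> ?F2" using F(2) by blast
      ultimately have "prime_ideal C P" "F \<inter> P = {}" by blast+
      then show False using F(3) by blast
    qed
    have e1: "Vc ?F1 = Z1"
    proof
      show "Vc ?F1 \<subseteq> Z1" using Vc_Spc Z(6) sup2 disF by blast
    qed (rule sup1)
    have e2: "Vc ?F2 = Z2"
    proof
      show "Vc ?F2 \<subseteq> Z2" using Vc_Spc Z(6) sup1 disF by blast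
    qed (rule sup2)
    show ?thesis using e1 e2 F(1) by blast
  next
    assume N: "spc_noetherian C"
    obtain F1 where "finite F1" "Vc F1 = Vc S1" using noeth_fin[OF N, of S1] by blast
    moreover obtain F2 where "finite F2" "Vc F2 = Vc S2" using noeth_fin[OF N, of S2] by blast
    ultimately show ?thesis using S by blast
  qed
  then obtain F1 F2 where F: "finite F1" "finite F2" "Vc F1 = Z1" "Vc F2 = Z2" by blast
  show ?thesis using c_to_a_fin[of F1 F2] F Z by blast
qed

end

theorem theoremB:
  fixes C :: "('o, 'm) mdc"
  assumes "is_MDC C"
  defines "a \<equiv> (\<exists>I J. proper_ideal C I \<and> proper_ideal C J \<and> coprime C I J \<and> complementary C I J)"
      and "b \<equiv> (\<exists>I J. principal_ideal C I \<and> principal_ideal C J \<and> proper_ideal C I \<and> proper_ideal C J \<and>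
                       coprime C I J \<and> complementary C I J)"
      and "c \<equiv> spc_disconnected C"
  shows "(a \<longleftrightarrow> b) \<and> (a \<longrightarrow> c) \<and>
         ((\<exists>G. thick_gen C {G} = UNIV) \<or> spc_noetherian C \<longrightarrow> (a \<longleftrightarrow> c) \<and> (b \<longleftrightarrow> c))"
proof -
  interpret MDC C by (rule MDC.intro) (rule assms(1))
  have ab: "a \<longleftrightarrow> b"
  proof
    assume a then show b unfolding a_def b_def using a_to_b by blast
  next
    assume b then show a unfolding a_def b_def by blast
  qed
  have bc: "b \<longrightarrow> c" unfolding b_def c_def using b_to_c by blast
  have ca: "(\<exists>G. thick_gen C {G} = UNIV) \<or> spc_noetherian C \<longrightarrow> c \<longrightarrow> a"
    unfolding a_def c_def using c_to_a by blast
  show ?thesis using ab bc ca by blast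
qed


end
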